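(* Assume $n>R$ and let $\rho_{\min}:=\min_r\rho_r$. For every $f\in\mathcal F$, $$\left(1-\frac{2}{n\rho_{\min}}\right)\mathrm L_\Omega(f)\le\mathbb E[\bar U_\Omega(f)]\le\left(1+\frac{R}{n-R}\right)\mathrm L_\Omega(f),$$ the expectation being over the labeled sample. In particular $\mathbb E[\bar U_\Omega(f)]\to\mathrm L_\Omega(f)$ as $N\to\infty$.
   Context: Setup: Let $\mathcal X$ be a measurable space, $R\ge2$, $\rho=(\rho_1,\dots,\rho_R)$ a probability vector with all $\rho_r>0$, and $\mathcal D_1,\dots,\mathcal D_R$ distributions on $\mathcal X$; $\bar{\mathcal D}:=\sum_r\rho_r\mathcal D_r$. A labeled sample consists of $N$ i.i.d. pairs $(X_j,Y_j)$ with $\mathbb P(Y_j=r)=\rho_r$ and $X_j\mid Y_j=r\sim\mathcal D_r$; $S=(X_1,\dots,X_N)$ (elements distinguished by index), $S_r=\{X_j:Y_j=r\}$, $N_r=|S_r|$, $\widehat\rho_r=N_r/N$. Fix an integer $k\ge1$. $\mathcal F$ is a class of maps $f:\mathcal X\to\mathbb R^d$, $\phi:\mathbb R^k\to\mathbb R_+$, and $\ell_{\phi,f}(x,x^+,x_1^-,\dots,x_k^-):=\phi\big((f(x)^\top[f(x^+)-f(x_i^-)])_{i=1}^k\big)$, with $0\le\ell_{\phi,f}\le\mathcal B$ for all $f\in\mathcal F$. Population risk with arbitrary collisions: $\mathrm L_\Omega(f):=\sum_r\rho_r\,\mathbb E\big[\ell_{\phi,f}(X,X^+,X^-_1,\dots,X^-_k)\big]$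 with $X,X^+\sim\mathcal D_r$, $X_i^-\sim\bar{\mathcal D}$, all independent. Auxiliary estimator: $n:=2\lfloor N/(k+2)\rfloor$. $\Pi$ is the set of all permutations of $[N]$. For $\pi\in\Pi$ let $I_\pi=\{\pi(1),\dots,\pi(n)\}$, $n_r^\pi:=|\{j\in I_\pi:Y_j=r\}|$, and let $\Omega_r^\pi$ be the set of index tuples $(a,b,c_1,\dots,c_k)$ of pairwise distinct indices in $[N]$ with $a,b\in I_\pi$, $Y_a=Y_b=r$, and $c_1,\dots,c_k\notin I_\pi$. $U_{\Omega_r^\pi}(f)$ is the average of $\ell_{\phi,f}(X_a,X_b,X_{c_1},\dots,X_{c_k})$ over $\Omega_r^\pi$ ($:=0$ if empty). $\omega_r^\pi:=\lfloor n_r^\pi/2\rfloor/\sum_{q}\lfloor n_q^\pi/2\rfloor$ ($:=0$ if the denominator is $0$). $\bar U_\Omega(f):=\frac{1}{N!}\sum_{\pi\in\Pi}\sum_{r=1}^R\omega_r^\pi U_{\Omega_r^\pi}(f)$. *)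

theory Defs
  imports "HOL-Probability.Probability"
begin

text \<open>Labels are 0,...,R-1; sample indices are 0,...,N-1; k = CARD('k); d = CARD('d).\<close>

definition closs ::
  "(real^'k \<Rightarrow> real) \<Rightarrow> ('a \<Rightarrow> real^'d) \<Rightarrow> 'a \<Rightarrow> 'a \<Rightarrow> ('k \<Rightarrow> 'a) \<Rightarrow> real" where
  "closs \<phi> f x xp xn = \<phi> (\<chi> i. f x \<bullet> (f xp - f (xn i)))"

definition mixture :: "'a measure \<Rightarrow> nat \<Rightarrow> (nat \<Rightarrow> real) \<Rightarrow> (nat \<Rightarrow> 'a measure) \<Rightarrow> 'a measure" where
  "mixture M R \<rho> D =
     measure_of (space M) (sets M) (\<lambda>A. \<Sum>r<R. ennreal (\<rho> r) * emeasure (D r) A)"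

definition pop_risk ::
  "'a measure \<Rightarrow> nat \<Rightarrow> (nat \<Rightarrow> real) \<Rightarrow> (nat \<Rightarrow> 'a measure) \<Rightarrow>
   (real^'k \<Rightarrow> real) \<Rightarrow> ('a \<Rightarrow> real^'d) \<Rightarrow> real" where
  "pop_risk M R \<rho> D \<phi> f =
     (\<Sum>r<R. \<rho> r * (\<integral>z. closs \<phi> f (fst z) (fst (snd z)) (snd (snd z))
        \<partial>(D r \<Otimes>\<^sub>M (D r \<Otimes>\<^sub>M PiM (UNIV :: 'k set) (\<lambda>_. mixture M R \<rho> D)))))"

definition half_size :: "nat \<Rightarrow> nat \<Rightarrow> nat" where
  "half_size k N = 2 * (N div (k + 2))"

definition Ipi :: "nat \<Rightarrow> nat \<Rightarrow> (nat \<Rightarrow> nat) \<Rightarrow> nat set" where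
  "Ipi k N \<pi> = \<pi> ` {..<half_size k N}"

definition npi :: "nat \<Rightarrow> nat \<Rightarrow> (nat \<Rightarrow> nat) \<Rightarrow> (nat \<Rightarrow> nat) \<Rightarrow> nat \<Rightarrow> nat" where
  "npi k N ys \<pi> r = card {j \<in> Ipi k N \<pi>. ys j = r}"

definition Omega_pi :: "nat \<Rightarrow> (nat \<Rightarrow> nat) \<Rightarrow> (nat \<Rightarrow> nat) \<Rightarrow> nat \<Rightarrow> (nat \<times> nat \<times> ('k \<Rightarrow> nat)) set" where
  "Omega_pi N ys \<pi> r =
     (let I = Ipi CARD('k) N \<pi> in
      {(a, b, c). a \<in> I \<and> b \<in> I \<and> a \<noteq> b \<and> ys a = r \<and> ys b = r \<and>
                  inj c \<and> range c \<subseteq> {..<N} - I \<and> a \<notin> range c \<and> b \<notin> range c})"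

definition U_Omega ::
  "(real^'k \<Rightarrow> real) \<Rightarrow> ('a \<Rightarrow> real^'d) \<Rightarrow> nat \<Rightarrow> (nat \<Rightarrow> 'a) \<Rightarrow> (nat \<Rightarrow> nat) \<Rightarrow>
   (nat \<Rightarrow> nat) \<Rightarrow> nat \<Rightarrow> real" where
  "U_Omega \<phi> f N xs ys \<pi> r =
     (let T = (Omega_pi N ys \<pi> r :: (nat \<times> nat \<times> ('k \<Rightarrow> nat)) set) in
      if T = {} then 0
      else (\<Sum>(a, b, c)\<in>T. closs \<phi> f (xs a) (xs b) (xs \<circ> c)) / real (card T))"

definition omega_w :: "nat \<Rightarrow> nat \<Rightarrow> nat \<Rightarrow> (nat \<Rightarrow> nat) \<Rightarrow> (nat \<Rightarrow> nat) \<Rightarrow> nat \<Rightarrow> real" where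
  "omega_w R k N ys \<pi> r =
     (let den = (\<Sum>q<R. npi k N ys \<pi> q div 2) in
      if den = 0 then 0 else real (npi k N ys \<pi> r div 2) / real den)"

definition Ubar ::
  "nat \<Rightarrow> (real^'k \<Rightarrow> real) \<Rightarrow> ('a \<Rightarrow> real^'d) \<Rightarrow> nat \<Rightarrow> (nat \<Rightarrow> 'a) \<Rightarrow> (nat \<Rightarrow> nat) \<Rightarrow> real" where
  "Ubar R \<phi> f N xs ys =
     (1 / fact N) * (\<Sum>\<pi>\<in>{\<pi>. \<pi> permutes {..<N}}.
        \<Sum>r<R. omega_w R CARD('k) N ys \<pi> r * U_Omega \<phi> f N xs ys \<pi> r)"

text \<open>Expectation over the labeled sample: labels \<open>Y_j\<close> i.i.d. with \<open>P(Y_j = r) = \<rho>_r\<close>,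
  and, given the labels, \<open>X_j\<close> independent with \<open>X_j \<sim> D_{Y_j}\<close>.\<close>
definition sample_expect ::
  "nat \<Rightarrow> (nat \<Rightarrow> real) \<Rightarrow> (nat \<Rightarrow> 'a measure) \<Rightarrow> nat \<Rightarrow>
   ((nat \<Rightarrow> 'a) \<Rightarrow> (nat \<Rightarrow> nat) \<Rightarrow> real) \<Rightarrow> real" where
  "sample_expect R \<rho> D N G =
     (\<Sum>ys\<in>{..<N} \<rightarrow>\<^sub>E {..<R}. (\<Prod>j<N. \<rho> (ys j)) *
        (\<integral>xs. G xs ys \<partial>(PiM {..<N} (\<lambda>j. D (ys j)))))"

end

theory Submission
  imports Defs
begin

lemma vec_lambda_measurable:
  fixes g :: "'k::finite \<Rightarrow> 'b \<Rightarrow> real"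
  assumes "\<And>i. g i \<in> borel_measurable N"
  shows "(\<lambda>x. (\<chi> i. g i x) :: real^'k) \<in> borel_measurable N"
proof (subst borel_measurable_euclidean_space, intro ballI)
  fix b :: "real^'k" assume "b \<in> Basis"
  then obtain j where b: "b = axis j 1" by (auto simp: Basis_vec_def)
  have "(\<lambda>x. (\<chi> i. g i x) \<bullet> b) = g j" by (auto simp: b inner_axis)
  then show "(\<lambda>x. (\<chi> i. g i x) \<bullet> b) \<in> borel_measurable N" using assms by simp
qed

lemma closs_measurable:
  fixes \<phi> :: "real^'k \<Rightarrow> real" and f :: "'a \<Rightarrow> real^'d"
  assumes "\<phi> \<in> borel_measurable borel" "f \<in> borel_measurable M"
    and "X \<in> measurable N M" "XP \<in> measurable N M" "\<And>i. (\<lambda>w. XN w i) \<in> measurable N M"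
  shows "(\<lambda>w. closs \<phi> f (X w) (XP w) (XN w)) \<in> borel_measurable N"
  unfolding closs_def
  apply (rule measurable_compose[OF _ assms(1)])
  apply (rule vec_lambda_measurable)
  using assms by measurable

lemma wsum_measure_emeasure:
  fixes w :: "'t \<Rightarrow> ennreal"
  assumes fin: "finite T" and sets: "\<And>t. t \<in> T \<Longrightarrow> sets (\<mu> t) = sets M"
    and A: "A \<in> sets M"
  shows "emeasure (measure_of (space M) (sets M) (\<lambda>A. \<Sum>t\<in>T. w t * emeasure (\<mu> t) A)) A
         = (\<Sum>t\<in>T. w t * emeasure (\<mu> t) A)"
proof (rule emeasure_measure_of_sigma[OF sets.sigma_algebra_axioms _ _ A])
  show "positive (sets M) (\<lambda>A. \<Sum>t\<in>T. w t * emeasure (\<mu> t) A)"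
    by (auto simp: positive_def)
  show "countably_additive (sets M) (\<lambda>A. \<Sum>t\<in>T. w t * emeasure (\<mu> t) A)"
  proof (rule countably_additiveI)
    fix F :: "nat \<Rightarrow> _" assume F: "range F \<subseteq> sets M" "disjoint_family F" "\<Union> (range F) \<in> sets M"
    have "(\<Sum>i. \<Sum>t\<in>T. w t * emeasure (\<mu> t) (F i)) = (\<Sum>t\<in>T. \<Sum>i. w t * emeasure (\<mu> t) (F i))"
      by (rule suminf_sum) auto
    also have "\<dots> = (\<Sum>t\<in>T. w t * emeasure (\<mu> t) (\<Union> (range F)))"
    proof (rule sum.cong[OF refl])
      fix t assume t: "t \<in> T"
      have "(\<Sum>i. w t * emeasure (\<mu> t) (F i)) = w t * (\<Sum>i. emeasure (\<mu> t) (F i))"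
        by (rule ennreal_suminf_cmult)
      also have "(\<Sum>i. emeasure (\<mu> t) (F i)) = emeasure (\<mu> t) (\<Union> (range F))"
        using F sets[OF t] by (intro suminf_emeasure) auto
      finally show "(\<Sum>i. w t * emeasure (\<mu> t) (F i)) = w t * emeasure (\<mu> t) (\<Union> (range F))" .
    qed
    finally show "(\<Sum>i. \<Sum>t\<in>T. w t * emeasure (\<mu> t) (F i)) = (\<Sum>t\<in>T. w t * emeasure (\<mu> t) (\<Union> (range F)))" .
  qed
qed

lemma nn_integral_wsum_measure:
  fixes w :: "'t \<Rightarrow> ennreal"
  assumes fin: "finite T" and sets: "\<And>t. t \<in> T \<Longrightarrow> sets (\<mu> t) = sets M"
    and f: "f \<in> borel_measurable M"
  shows "integral\<^sup>N (measure_of (space M) (sets M) (\<lambda>A. \<Sum>t\<in>T. w t * emeasure (\<mu> t) A)) f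
         = (\<Sum>t\<in>T. w t * integral\<^sup>N (\<mu> t) f)"
proof -
  let ?S = "measure_of (space M) (sets M) (\<lambda>A. \<Sum>t\<in>T. w t * emeasure (\<mu> t) A)"
  have sS: "sets ?S = sets M" by (simp add: sets.space_closed)
  have spS: "space ?S = space M" by (simp add: sets.space_closed)
  have sp: "\<And>t. t \<in> T \<Longrightarrow> space (\<mu> t) = space M" using sets by (metis sets_eq_imp_space_eq)
  from f show ?thesis
  proof induct
    case (cong f g)
    have "integral\<^sup>N ?S f = integral\<^sup>N ?S g"
      using cong by (intro nn_integral_cong) (simp add: spS)
    moreover have "\<And>t. t \<in> T \<Longrightarrow> integral\<^sup>N (\<mu> t) f = integral\<^sup>N (\<mu> t) g"
      using cong by (intro nn_integral_cong) (simp add: sp)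
    ultimately show ?case using cong by (metis (no_types, lifting) sum.cong)
  next
    case (set A)
    have "integral\<^sup>N ?S (indicator A) = emeasure ?S A"
      using set by (intro nn_integral_indicator) (simp add: sS)
    also have "\<dots> = (\<Sum>t\<in>T. w t * emeasure (\<mu> t) A)"
      using set fin sets by (intro wsum_measure_emeasure) auto
    also have "\<dots> = (\<Sum>t\<in>T. w t * integral\<^sup>N (\<mu> t) (indicator A))"
      using set sets by (intro sum.cong refl arg_cong2[where f="(*)"] nn_integral_indicator[symmetric]) auto
    finally show ?case .
  next
    case (mult u c)
    have "integral\<^sup>N ?S (\<lambda>x. c * u x) = c * integral\<^sup>N ?S u"
      using mult by (intro nn_integral_cmult) (simp add: measurable_def sS spS)
    also have "\<dots> = (\<Sum>t\<in>T. w t * (c * integral\<^sup>N (\<mu> t) u))"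
      using mult by (simp add: sum_distrib_left mult_ac)
    also have "\<dots> = (\<Sum>t\<in>T. w t * integral\<^sup>N (\<mu> t) (\<lambda>x. c * u x))"
      using mult sets by (intro sum.cong refl arg_cong2[where f="(*)"] nn_integral_cmult[symmetric])
        (auto cong: measurable_cong_sets)
    finally show ?case .
  next
    case (add u v)
    have "integral\<^sup>N ?S (\<lambda>x. v x + u x) = integral\<^sup>N ?S v + integral\<^sup>N ?S u"
      using add by (intro nn_integral_add) (auto cong: measurable_cong_sets simp: sS)
    also have "\<dots> = (\<Sum>t\<in>T. w t * (integral\<^sup>N (\<mu> t) v + integral\<^sup>N (\<mu> t) u))"
      using add by (simp add: sum.distrib distrib_left)
    also have "\<dots> = (\<Sum>t\<in>T. w t * integral\<^sup>N (\<mu> t) (\<lambda>x. v x + u x))"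
      using add sets by (intro sum.cong refl arg_cong2[where f="(*)"] nn_integral_add[symmetric])
        (auto cong: measurable_cong_sets)
    finally show ?case .
  next
    case (seq U)
    have SU: "Sup (range U) = (\<lambda>x. SUP i. U i x)" by (simp add: fun_eq_iff image_comp)
    have "integral\<^sup>N ?S (Sup (range U)) = (SUP i. integral\<^sup>N ?S (U i))"
      unfolding SU using seq by (intro nn_integral_monotone_convergence_SUP) (auto cong: measurable_cong_sets simp: sS)
    also have "\<dots> = (SUP i. \<Sum>t\<in>T. w t * integral\<^sup>N (\<mu> t) (U i))"
      using seq by simp
    also have "\<dots> = (\<Sum>t\<in>T. SUP i. w t * integral\<^sup>N (\<mu> t) (U i))"
    proof (rule ennreal_SUP_sum)
      fix t assume "t \<in> T"
      show "incseq (\<lambda>i. w t * integral\<^sup>N (\<mu> t) (U i))"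
        using seq unfolding incseq_def
        by (auto intro!: mult_left_mono nn_integral_mono simp: le_fun_def)
    qed
    also have "\<dots> = (\<Sum>t\<in>T. w t * integral\<^sup>N (\<mu> t) (Sup (range U)))"
    proof (rule sum.cong[OF refl])
      fix t assume t: "t \<in> T"
      have "integral\<^sup>N (\<mu> t) (Sup (range U)) = (SUP i. integral\<^sup>N (\<mu> t) (U i))"
        unfolding SU using seq sets[OF t] by (intro nn_integral_monotone_convergence_SUP) (auto cong: measurable_cong_sets)
      then show "(SUP i. w t * integral\<^sup>N (\<mu> t) (U i)) = w t * integral\<^sup>N (\<mu> t) (Sup (range U))"
        by (simp add: SUP_mult_left_ennreal)
    qed
    finally show ?case .
  qed
qed

locale clset =
  fixes M :: "'a measure" and R :: nat and \<rho> :: "nat \<Rightarrow> real" and D :: "nat \<Rightarrow> 'a measure"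
  assumes rho_pos: "\<And>r. r < R \<Longrightarrow> \<rho> r > 0"
    and rho_sum: "(\<Sum>r<R. \<rho> r) = 1"
    and D_prob: "\<And>r. prob_space (D r)"
    and D_sets: "\<And>r. sets (D r) = sets M"
begin

abbreviation "mix \<equiv> mixture M R \<rho> D"

lemma D_space: "space (D r) = space M"
  using D_sets sets_eq_imp_space_eq by blast

lemma mix_sets[simp]: "sets mix = sets M"
  by (simp add: mixture_def sets.space_closed)

lemma mix_space[simp]: "space mix = space M"
  by (simp add: mixture_def sets.space_closed)

lemma mix_emeasure: "A \<in> sets M \<Longrightarrow> emeasure mix A = (\<Sum>r<R. ennreal (\<rho> r) * emeasure (D r) A)"
  unfolding mixture_def by (rule wsum_measure_emeasure) (auto simp: D_sets)

lemma mix_prob: "prob_space mix"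
proof
  have "emeasure mix (space mix) = (\<Sum>r<R. ennreal (\<rho> r) * emeasure (D r) (space M))"
    by (simp add: mix_emeasure)
  also have "\<dots> = (\<Sum>r<R. ennreal (\<rho> r))"
    using prob_space.emeasure_space_1[OF D_prob] by (simp add: D_space)
  also have "\<dots> = ennreal (\<Sum>r<R. \<rho> r)"
    using rho_pos by (subst sum_ennreal) (auto intro: less_imp_le)
  finally show "emeasure mix (space mix) = 1" by (simp add: rho_sum)
qed

lemma nn_integral_mix:
  "f \<in> borel_measurable M \<Longrightarrow> integral\<^sup>N mix f = (\<Sum>r<R. ennreal (\<rho> r) * integral\<^sup>N (D r) f)"
  unfolding mixture_def by (rule nn_integral_wsum_measure) (auto simp: D_sets)

lemma PiM_D_sets: "sets (PiM K (\<lambda>i. D (s i))) = sets (PiM K (\<lambda>_. M))"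
  by (rule sets_PiM_cong) (auto simp: D_sets)

lemma PiM_mix_sets: "sets (PiM K (\<lambda>i. mix)) = sets (PiM K (\<lambda>_. M))"
  by (rule sets_PiM_cong) auto

lemma PiM_mix_eq:
  fixes K :: "'i set"
  assumes K: "finite K"
  shows "PiM K (\<lambda>_. mix) = measure_of (space (PiM K (\<lambda>_. M))) (sets (PiM K (\<lambda>_. M)))
            (\<lambda>A. \<Sum>s\<in>K \<rightarrow>\<^sub>E {..<R}. ennreal (\<Prod>i\<in>K. \<rho> (s i)) * emeasure (PiM K (\<lambda>i. D (s i))) A)"
    (is "_ = ?S")
proof -
  interpret mp: product_prob_space "(\<lambda>_. mix) :: 'i \<Rightarrow> 'a measure" using mix_prob by (simp add: product_prob_space_def product_prob_space_axioms_def product_sigma_finite_def prob_space_imp_sigma_finite)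
  have fin: "finite (K \<rightarrow>\<^sub>E {..<R})" using K by (simp add: finite_PiE)
  show ?thesis
  proof (rule mp.PiM_eqI[symmetric, OF K])
    show "sets ?S = sets (PiM K (\<lambda>_. mix))"
      by (simp add: PiM_mix_sets sets.space_closed)
    fix A assume A: "\<And>i. i \<in> K \<Longrightarrow> A i \<in> sets mix"
    have PA: "PiE K A \<in> sets (PiM K (\<lambda>_. M))" using A K by (auto intro!: sets_PiM_I_finite)
    have "emeasure ?S (PiE K A) = (\<Sum>s\<in>K \<rightarrow>\<^sub>E {..<R}. ennreal (\<Prod>i\<in>K. \<rho> (s i)) * emeasure (PiM K (\<lambda>i. D (s i))) (PiE K A))"
      by (rule wsum_measure_emeasure[OF fin _ PA]) (rule PiM_D_sets)
    also have "\<dots> = (\<Sum>s\<in>K \<rightarrow>\<^sub>E {..<R}. \<Prod>i\<in>K. ennreal (\<rho> (s i)) * emeasure (D (s i)) (A i))"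
    proof (rule sum.cong[OF refl])
      fix s assume s: "s \<in> K \<rightarrow>\<^sub>E {..<R}"
      interpret ps: product_prob_space "(\<lambda>i. D (s i)) :: 'i \<Rightarrow> 'a measure" using D_prob by (simp add: product_prob_space_def product_prob_space_axioms_def product_sigma_finite_def prob_space_imp_sigma_finite)
      have "emeasure (PiM K (\<lambda>i. D (s i))) (PiE K A) = (\<Prod>i\<in>K. emeasure (D (s i)) (A i))"
        using A K by (intro ps.emeasure_PiM) (auto simp: D_sets)
      moreover have "ennreal (\<Prod>i\<in>K. \<rho> (s i)) = (\<Prod>i\<in>K. ennreal (\<rho> (s i)))"
        using s rho_pos by (intro prod_ennreal[symmetric]) (auto intro: less_imp_le)
      ultimately show "ennreal (\<Prod>i\<in>K. \<rho> (s i)) * emeasure (PiM K (\<lambda>i. D (s i))) (PiE K A) = (\<Prod>i\<in>K. ennreal (\<rho> (s i)) * emeasure (D (s i)) (A i))"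
        by (simp add: prod.distrib)
    qed
    also have "\<dots> = (\<Prod>i\<in>K. \<Sum>r<R. ennreal (\<rho> r) * emeasure (D r) (A i))"
      using K by (subst prod_sum_PiE) auto
    also have "\<dots> = (\<Prod>i\<in>K. emeasure mix (A i))"
      using A by (intro prod.cong refl) (simp add: mix_emeasure)
    finally show "emeasure ?S (PiE K A) = (\<Prod>i\<in>K. emeasure mix (A i))" .
  qed
qed

lemma nn_integral_PiM_mix:
  fixes K :: "'i set"
  assumes K: "finite K" and g: "g \<in> borel_measurable (PiM K (\<lambda>_. M))"
  shows "integral\<^sup>N (PiM K (\<lambda>_. mix)) g =
     (\<Sum>s\<in>K \<rightarrow>\<^sub>E {..<R}. ennreal (\<Prod>i\<in>K. \<rho> (s i)) * integral\<^sup>N (PiM K (\<lambda>i. D (s i))) g)"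
  unfolding PiM_mix_eq[OF K]
  by (rule nn_integral_wsum_measure[OF _ _ g]) (auto simp: K finite_PiE PiM_D_sets)

end

lemma comp_measurable_PiM:
  fixes c :: "'k \<Rightarrow> nat" and \<mu> :: "nat \<Rightarrow> 'a measure"
  assumes "range c \<subseteq> J"
  shows "(\<lambda>x. x \<circ> c) \<in> measurable (PiM J \<mu>) (PiM UNIV (\<lambda>i. \<mu> (c i)))"
proof -
  have "(\<lambda>x i. x (c i)) \<in> measurable (PiM J \<mu>) (PiM UNIV (\<lambda>i. \<mu> (c i)))"
    using assms by (intro measurable_PiM_single') (auto simp: space_PiM PiE_iff intro!: measurable_component_singleton)
  then show ?thesis by (simp add: comp_def)
qed

lemma nn_integral_PiM_pick:
  fixes \<mu> :: "nat \<Rightarrow> 'a measure" and c :: "'k::finite \<Rightarrow> nat"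
  assumes prob: "\<And>j. prob_space (\<mu> j)" and sets: "\<And>j. sets (\<mu> j) = sets M"
    and J: "finite J" "a \<in> J" "b \<in> J" "a \<noteq> b" and c: "range c \<subseteq> J - {a, b}" and cinj: "inj c"
    and g: "g \<in> borel_measurable (M \<Otimes>\<^sub>M (M \<Otimes>\<^sub>M PiM UNIV (\<lambda>_. M)))"
  shows "(\<integral>\<^sup>+ x. g (x a, x b, x \<circ> c) \<partial>PiM J \<mu>)
       = (\<integral>\<^sup>+ z. g z \<partial>(\<mu> a \<Otimes>\<^sub>M (\<mu> b \<Otimes>\<^sub>M PiM UNIV (\<lambda>i. \<mu> (c i)))))"
proof -
  interpret pp: product_prob_space \<mu> using prob by (simp add: product_prob_space_def product_prob_space_axioms_def product_sigma_finite_def prob_space_imp_sigma_finite)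
  let ?P = "PiM UNIV (\<lambda>i. \<mu> (c i))"
  interpret P: prob_space ?P using prob by (intro prob_space_PiM) auto
  interpret b: prob_space "\<mu> b" by (rule prob)
  interpret bP: pair_prob_space "\<mu> b" ?P ..
  interpret bPs: prob_space "\<mu> b \<Otimes>\<^sub>M ?P" by (rule bP.prob_space_axioms)
  have sP: "sets ?P = sets (PiM UNIV (\<lambda>_. M))" by (rule sets_PiM_cong) (auto simp: sets)
  have g': "g \<in> borel_measurable (\<mu> a \<Otimes>\<^sub>M (\<mu> b \<Otimes>\<^sub>M ?P))"
  proof -
    have S: "sets (\<mu> a \<Otimes>\<^sub>M (\<mu> b \<Otimes>\<^sub>M ?P)) = sets (M \<Otimes>\<^sub>M (M \<Otimes>\<^sub>M PiM UNIV (\<lambda>_. M)))"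
      by (intro sets_pair_measure_cong) (auto simp: sets sP)
    show ?thesis using g by (subst measurable_cong_sets[OF S refl])
  qed
  define J1 where "J1 = J - {a}"
  define J2 where "J2 = J1 - {b}"
  have J1: "J = insert a J1" "a \<notin> J1" "finite J1" using J by (auto simp: J1_def)
  have J2: "J1 = insert b J2" "b \<notin> J2" "finite J2" "range c \<subseteq> J2" using J c by (auto simp: J1_def J2_def)
  have cm: "(\<lambda>x. x \<circ> c) \<in> measurable (PiM K \<mu>) ?P" if "range c \<subseteq> K" for K
    using comp_measurable_PiM[OF that] .
  have m_pick: "(\<lambda>x. (x a, x b, x \<circ> c)) \<in> measurable (PiM K \<mu>) (\<mu> a \<Otimes>\<^sub>M (\<mu> b \<Otimes>\<^sub>M ?P))"
    if "a \<in> K" "b \<in> K" "range c \<subseteq> K" for K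
    using that cm[of K] by measurable
  have "(\<integral>\<^sup>+ x. g (x a, x b, x \<circ> c) \<partial>PiM J \<mu>)
      = (\<integral>\<^sup>+ y. (\<integral>\<^sup>+ x. g ((x(a := y)) a, (x(a := y)) b, (x(a := y)) \<circ> c) \<partial>PiM J1 \<mu>) \<partial>\<mu> a)"
  proof -
    have "(\<lambda>x. g (x a, x b, x \<circ> c)) \<in> borel_measurable (PiM J \<mu>)"
      using measurable_compose[OF m_pick[of J] g'] J c by auto
    then show ?thesis unfolding J1(1) using J1
      by (intro pp.product_nn_integral_insert_rev) auto
  qed
  also have "\<dots> = (\<integral>\<^sup>+ y. (\<integral>\<^sup>+ x. g (y, x b, x \<circ> c) \<partial>PiM J1 \<mu>) \<partial>\<mu> a)"
  proof -
    have *: "\<And>x y. (x(a := y)) \<circ> c = x \<circ> c" using c by (auto simp: fun_eq_iff)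
    show ?thesis unfolding * using J by simp
  qed
  also have "\<dots> = (\<integral>\<^sup>+ y. (\<integral>\<^sup>+ q. g (y, q) \<partial>(\<mu> b \<Otimes>\<^sub>M ?P)) \<partial>\<mu> a)"
  proof (rule nn_integral_cong)
    fix y assume y: "y \<in> space (\<mu> a)"
    have gy: "(\<lambda>q. g (y, q)) \<in> borel_measurable (\<mu> b \<Otimes>\<^sub>M ?P)"
      using g' y by measurable
    have "(\<integral>\<^sup>+ x. g (y, x b, x \<circ> c) \<partial>PiM J1 \<mu>)
        = (\<integral>\<^sup>+ z. (\<integral>\<^sup>+ x. g (y, (x(b := z)) b, (x(b := z)) \<circ> c) \<partial>PiM J2 \<mu>) \<partial>\<mu> b)"
    proof -
      have "(\<lambda>x. (x b, x \<circ> c)) \<in> measurable (PiM J1 \<mu>) (\<mu> b \<Otimes>\<^sub>M ?P)"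
      proof -
        have "range c \<subseteq> J1" "b \<in> J1" using J2 by auto
        then show ?thesis using cm[of J1] by measurable
      qed
      from measurable_compose[OF this gy] have "(\<lambda>x. g (y, x b, x \<circ> c)) \<in> borel_measurable (PiM J1 \<mu>)" .
      then show ?thesis unfolding J2(1) using J2
        by (intro pp.product_nn_integral_insert_rev) auto
    qed
    also have "\<dots> = (\<integral>\<^sup>+ z. (\<integral>\<^sup>+ x. g (y, z, x \<circ> c) \<partial>PiM J2 \<mu>) \<partial>\<mu> b)"
    proof -
      have *: "\<And>x z. (x(b := z)) \<circ> c = x \<circ> c" using c by (auto simp: fun_eq_iff)
      show ?thesis unfolding * by simp
    qed
    also have "\<dots> = (\<integral>\<^sup>+ z. (\<integral>\<^sup>+ w. g (y, z, w) \<partial>?P) \<partial>\<mu> b)"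
    proof (rule nn_integral_cong)
      fix z assume z: "z \<in> space (\<mu> b)"
      have gyz: "(\<lambda>w. g (y, z, w)) \<in> borel_measurable ?P"
        using g' y z by measurable
      have "distr (PiM J2 \<mu>) ?P (\<lambda>\<omega>. \<omega> \<circ> c) = ?P"
      proof -
        have d: "distr (PiM J2 \<mu>) ?P (\<lambda>\<omega>. \<lambda>n\<in>UNIV. \<omega> (c n)) = ?P"
          using J2 cinj prob by (intro distr_PiM_reindex) auto
        have e: "(\<lambda>\<omega>. \<lambda>n\<in>UNIV. \<omega> (c n)) = (\<lambda>\<omega>. \<omega> \<circ> c)" by (auto simp: fun_eq_iff)
        show ?thesis using d unfolding e .
      qed
      note d2 = this
      have d3: "(\<integral>\<^sup>+ w. g (y, z, w) \<partial>distr (PiM J2 \<mu>) ?P (\<lambda>\<omega>. \<omega> \<circ> c)) = (\<integral>\<^sup>+ w. g (y, z, w) \<partial>?P)"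
        by (rule arg_cong[OF d2])
      have "(\<integral>\<^sup>+ w. g (y, z, w) \<partial>?P) = (\<integral>\<^sup>+ w. g (y, z, w) \<partial>distr (PiM J2 \<mu>) ?P (\<lambda>\<omega>. \<omega> \<circ> c))"
        by (rule d3[symmetric])
      also have "\<dots> = (\<integral>\<^sup>+ x. g (y, z, x \<circ> c) \<partial>PiM J2 \<mu>)"
        using gyz cm[of J2] J2 by (intro nn_integral_distr) auto
      finally show "(\<integral>\<^sup>+ x. g (y, z, x \<circ> c) \<partial>PiM J2 \<mu>) = (\<integral>\<^sup>+ w. g (y, z, w) \<partial>?P)" ..
    qed
    also have "\<dots> = (\<integral>\<^sup>+ q. g (y, q) \<partial>(\<mu> b \<Otimes>\<^sub>M ?P))"
      using gy by (subst P.nn_integral_fst[symmetric]) auto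
    finally show "(\<integral>\<^sup>+ x. g (y, x b, x \<circ> c) \<partial>PiM J1 \<mu>) = (\<integral>\<^sup>+ q. g (y, q) \<partial>(\<mu> b \<Otimes>\<^sub>M ?P))" .
  qed
  also have "\<dots> = (\<integral>\<^sup>+ z. g z \<partial>(\<mu> a \<Otimes>\<^sub>M (\<mu> b \<Otimes>\<^sub>M ?P)))"
    using g' by (subst sigma_finite_measure.nn_integral_fst[OF prob_space_imp_sigma_finite[OF bP.prob_space_axioms], symmetric]) auto
  finally show ?thesis .
qed

definition mg :: "'i set \<Rightarrow> ('i \<Rightarrow> 'b) \<Rightarrow> ('i \<Rightarrow> 'b) \<Rightarrow> 'i \<Rightarrow> 'b" where
  "mg X u v = (\<lambda>j. if j \<in> X then u j else v j)"

lemma sum_PiE_split: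
  assumes "finite X" "finite Y" "X \<inter> Y = {}"
  shows "(\<Sum>y\<in>(X \<union> Y) \<rightarrow>\<^sub>E A. F y) = (\<Sum>u\<in>X \<rightarrow>\<^sub>E A. \<Sum>v\<in>Y \<rightarrow>\<^sub>E A. F (mg X u v))"
proof -
  have "(\<Sum>u\<in>X \<rightarrow>\<^sub>E A. \<Sum>v\<in>Y \<rightarrow>\<^sub>E A. F (mg X u v)) = (\<Sum>(u, v)\<in>(X \<rightarrow>\<^sub>E A) \<times> (Y \<rightarrow>\<^sub>E A). F (mg X u v))"
    by (rule sum.cartesian_product)
  also have "\<dots> = (\<Sum>y\<in>(X \<union> Y) \<rightarrow>\<^sub>E A. F y)"
    using assms
    by (intro sum.reindex_bij_witness[of _ "\<lambda>y. (restrict y X, restrict y Y)" "\<lambda>(u, v). mg X u v"])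
       (auto simp: mg_def PiE_iff extensional_def fun_eq_iff split: if_splits)
  finally show ?thesis ..
qed

lemma prod_mg:
  assumes "finite X" "finite Y" "X \<inter> Y = {}"
  shows "(\<Prod>j\<in>X \<union> Y. p (mg X u v j)) = (\<Prod>j\<in>X. p (u j)) * (\<Prod>j\<in>Y. p (v j))"
proof -
  have "(\<Prod>j\<in>X \<union> Y. p (mg X u v j)) = (\<Prod>j\<in>X. p (mg X u v j)) * (\<Prod>j\<in>Y. p (mg X u v j))"
    using assms by (rule prod.union_disjoint)
  also have "\<dots> = (\<Prod>j\<in>X. p (u j)) * (\<Prod>j\<in>Y. p (v j))"
    using assms by (intro arg_cong2[where f="(*)"] prod.cong) (auto simp: mg_def)
  finally show ?thesis .
qed

lemma sum_prod_PiE_one: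
  fixes p :: "nat \<Rightarrow> real"
  assumes "finite J" "(\<Sum>r<R. p r) = 1"
  shows "(\<Sum>ys\<in>J \<rightarrow>\<^sub>E {..<R}. \<Prod>j\<in>J. p (ys j)) = 1"
  using prod_sum_PiE[of J "\<lambda>_. {..<R}" "\<lambda>_ r. p r"] assms by simp

lemma sum_prod_PiE_indicator:
  fixes p :: "nat \<Rightarrow> real"
  assumes "finite J" "(\<Sum>r<R. p r) = 1" "j \<in> J" "r < R"
  shows "(\<Sum>ys\<in>J \<rightarrow>\<^sub>E {..<R}. (\<Prod>j\<in>J. p (ys j)) * (if ys j = r then 1 else 0)) = p r"
proof -
  define f where "f j' r' = p r' * (if j' = j then (if r' = r then 1 else 0) else 1)" for j' r'
  have "(\<Prod>j'\<in>J. \<Sum>r'<R. f j' r') = (\<Sum>ys\<in>J \<rightarrow>\<^sub>E {..<R}. \<Prod>j'\<in>J. f j' (ys j'))"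
    using assms by (intro prod_sum_PiE) auto
  also have "\<dots> = (\<Sum>ys\<in>J \<rightarrow>\<^sub>E {..<R}. (\<Prod>j\<in>J. p (ys j)) * (if ys j = r then 1 else 0))"
  proof (rule sum.cong[OF refl])
    fix ys
    have "(\<Prod>j'\<in>J. f j' (ys j')) = (\<Prod>j'\<in>J. p (ys j')) * (\<Prod>j'\<in>J. (if j' = j then (if ys j' = r then 1 else 0) else 1))"
      unfolding f_def by (rule prod.distrib)
    also have "(\<Prod>j'\<in>J. (if j' = j then (if ys j' = r then 1 else 0) else 1)) = (if ys j = r then 1 else (0::real))"
      using assms by (subst prod.delta) auto
    finally show "(\<Prod>j'\<in>J. f j' (ys j')) = (\<Prod>j\<in>J. p (ys j)) * (if ys j = r then 1 else 0)" .
  qed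
  finally have "(\<Sum>ys\<in>J \<rightarrow>\<^sub>E {..<R}. (\<Prod>j\<in>J. p (ys j)) * (if ys j = r then 1 else 0)) = (\<Prod>j'\<in>J. \<Sum>r'<R. f j' r')" ..
  also have "\<dots> = (\<Prod>j'\<in>J. if j' = j then p r else 1)"
  proof (rule prod.cong[OF refl])
    fix x assume x: "x \<in> J"
    show "(\<Sum>r'<R. f x r') = (if x = j then p r else 1)"
    proof (cases "x = j")
      case True
      then have "(\<Sum>r'<R. f x r') = (\<Sum>r'<R. if r' = r then p r' else 0)"
        by (intro sum.cong) (auto simp: f_def)
      also have "\<dots> = p r" using assms by simp
      finally show ?thesis using True by simp
    next
      case False
      then have "(\<Sum>r'<R. f x r') = (\<Sum>r'<R. p r')"
        by (intro sum.cong) (auto simp: f_def)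
      then show ?thesis using False assms by simp
    qed
  qed
  also have "\<dots> = p r" using assms by (subst prod.delta) auto
  finally show ?thesis .
qed

lemma sum_PiE_reindex_inj:
  fixes c :: "'k::finite \<Rightarrow> nat" and p :: "nat \<Rightarrow> real"
  assumes c: "inj c"
  shows "(\<Sum>u\<in>range c \<rightarrow>\<^sub>E A. (\<Prod>j\<in>range c. p (u j)) * h (u \<circ> c))
       = (\<Sum>s\<in>UNIV \<rightarrow>\<^sub>E A. (\<Prod>i\<in>UNIV. p (s i)) * h s)"
proof (rule sum.reindex_bij_witness[of _ "\<lambda>s::'k \<Rightarrow> _. \<lambda>j\<in>range c. s (inv c j)" "\<lambda>u. u \<circ> c"])
  fix u assume u: "u \<in> range c \<rightarrow>\<^sub>E A"
  show "(\<lambda>j\<in>range c. (u \<circ> c) (inv c j)) = u"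
    using u c by (auto simp: fun_eq_iff PiE_iff extensional_def)
  show "u \<circ> c \<in> UNIV \<rightarrow>\<^sub>E A" using u by (auto simp: PiE_iff)
  have "(\<Prod>j\<in>range c. p (u j)) = (\<Prod>i\<in>UNIV. p (u (c i)))"
    using c by (subst prod.reindex) auto
  then show "(\<Prod>i\<in>UNIV. p ((u \<circ> c) i)) * h (u \<circ> c) = (\<Prod>j\<in>range c. p (u j)) * h (u \<circ> c)"
    by simp
next
  fix s :: "'k \<Rightarrow> _" assume s: "s \<in> UNIV \<rightarrow>\<^sub>E A"
  show "(\<lambda>j\<in>range c. s (inv c j)) \<circ> c = s" using c by (auto simp: fun_eq_iff)
  show "(\<lambda>j\<in>range c. s (inv c j)) \<in> range c \<rightarrow>\<^sub>E A" using s by (auto simp: PiE_iff)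
qed

lemma sum_indep:
  fixes c :: "'k::finite \<Rightarrow> nat" and p :: "nat \<Rightarrow> real"
  assumes J: "finite J" and c: "inj c" "range c \<subseteq> J" and psum: "(\<Sum>r<R. p r) = 1"
    and g: "\<And>ys ys'. (\<And>j. j \<in> J - range c \<Longrightarrow> ys j = ys' j) \<Longrightarrow> g ys = g ys'"
  shows "(\<Sum>ys\<in>J \<rightarrow>\<^sub>E {..<R}. (\<Prod>j\<in>J. p (ys j)) * g ys * h (ys \<circ> c))
       = (\<Sum>ys\<in>J \<rightarrow>\<^sub>E {..<R}. (\<Prod>j\<in>J. p (ys j)) * g ys) * (\<Sum>s\<in>UNIV \<rightarrow>\<^sub>E {..<R}. (\<Prod>i\<in>UNIV. p (s i)) * h s)"
proof -
  let ?X = "range c" and ?Y = "J - range c"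
  have XY: "finite ?X" "finite ?Y" "?X \<inter> ?Y = {}" "?X \<union> ?Y = J" using J c by auto
  have gmg: "g (mg ?X u v) = g v" for u v by (rule g) (auto simp: mg_def)
  have hmg: "mg ?X u v \<circ> c = u \<circ> c" for u v by (auto simp: mg_def fun_eq_iff)
  have split: "(\<Sum>ys\<in>J \<rightarrow>\<^sub>E {..<R}. F ys) = (\<Sum>u\<in>?X \<rightarrow>\<^sub>E {..<R}. \<Sum>v\<in>?Y \<rightarrow>\<^sub>E {..<R}. F (mg ?X u v))" for F
    using sum_PiE_split[OF XY(1-3), where A="{..<R}" and F=F] XY(4) by simp
  have pr: "(\<Prod>j\<in>J. p (mg ?X u v j)) = (\<Prod>j\<in>?X. p (u j)) * (\<Prod>j\<in>?Y. p (v j))" for u v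
    using prod_mg[OF XY(1-3), where p=p and u=u and v=v] XY(4) by simp
  define Gs where "Gs = (\<Sum>v\<in>?Y \<rightarrow>\<^sub>E {..<R}. (\<Prod>j\<in>?Y. p (v j)) * g v)"
  have L: "(\<Sum>ys\<in>J \<rightarrow>\<^sub>E {..<R}. (\<Prod>j\<in>J. p (ys j)) * g ys * h (ys \<circ> c))
      = (\<Sum>u\<in>?X \<rightarrow>\<^sub>E {..<R}. (\<Prod>j\<in>?X. p (u j)) * h (u \<circ> c)) * Gs"
    unfolding split pr gmg hmg Gs_def sum_product
    by (intro sum.cong refl) (simp add: mult_ac)
  have R1: "(\<Sum>ys\<in>J \<rightarrow>\<^sub>E {..<R}. (\<Prod>j\<in>J. p (ys j)) * g ys)
      = (\<Sum>u\<in>?X \<rightarrow>\<^sub>E {..<R}. (\<Prod>j\<in>?X. p (u j))) * Gs"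
    unfolding split pr gmg Gs_def sum_product
    by (intro sum.cong refl) (simp add: mult_ac)
  have one: "(\<Sum>u\<in>?X \<rightarrow>\<^sub>E {..<R}. (\<Prod>j\<in>?X. p (u j))) = 1"
    using sum_prod_PiE_one[OF XY(1) psum] .
  show ?thesis unfolding L R1 one sum_PiE_reindex_inj[OF c(1)] by simp
qed

lemma nn_triple:
  assumes A: "prob_space A" and Q: "prob_space Q"
    and h: "h \<in> borel_measurable (A \<Otimes>\<^sub>M (A \<Otimes>\<^sub>M Q))"
  shows "integral\<^sup>N (A \<Otimes>\<^sub>M (A \<Otimes>\<^sub>M Q)) h
       = (\<integral>\<^sup>+ w. (\<integral>\<^sup>+ x. (\<integral>\<^sup>+ y. h (x, y, w) \<partial>A) \<partial>A) \<partial>Q)"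
proof -
  interpret A: prob_space A by (rule A)
  interpret Q: prob_space Q by (rule Q)
  interpret AQ: pair_prob_space A Q ..
  have "integral\<^sup>N (A \<Otimes>\<^sub>M (A \<Otimes>\<^sub>M Q)) h = (\<integral>\<^sup>+ x. (\<integral>\<^sup>+ q. h (x, q) \<partial>(A \<Otimes>\<^sub>M Q)) \<partial>A)"
    using h by (subst sigma_finite_measure.nn_integral_fst[OF prob_space_imp_sigma_finite[OF AQ.prob_space_axioms], symmetric]) auto
  also have "\<dots> = (\<integral>\<^sup>+ x. (\<integral>\<^sup>+ w. (\<integral>\<^sup>+ y. h (x, y, w) \<partial>A) \<partial>Q) \<partial>A)"
  proof (rule nn_integral_cong)
    fix x assume x: "x \<in> space A"
    have hx: "(\<lambda>q. h (x, q)) \<in> borel_measurable (A \<Otimes>\<^sub>M Q)" using h x by measurable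
    have "(\<integral>\<^sup>+ q. h (x, q) \<partial>(A \<Otimes>\<^sub>M Q)) = (\<integral>\<^sup>+ y. (\<integral>\<^sup>+ w. h (x, y, w) \<partial>Q) \<partial>A)"
      using hx by (subst Q.nn_integral_fst[symmetric]) auto
    also have "\<dots> = (\<integral>\<^sup>+ w. (\<integral>\<^sup>+ y. h (x, y, w) \<partial>A) \<partial>Q)"
      using hx by (intro AQ.Fubini'[symmetric]) (simp add: case_prod_beta')
    finally show "(\<integral>\<^sup>+ q. h (x, q) \<partial>(A \<Otimes>\<^sub>M Q)) = (\<integral>\<^sup>+ w. (\<integral>\<^sup>+ y. h (x, y, w) \<partial>A) \<partial>Q)" .
  qed
  also have "\<dots> = (\<integral>\<^sup>+ w. (\<integral>\<^sup>+ x. (\<integral>\<^sup>+ y. h (x, y, w) \<partial>A) \<partial>A) \<partial>Q)"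
  proof (rule AQ.Fubini'[symmetric])
    show "(\<lambda>(x, w). \<integral>\<^sup>+ y. h (x, y, w) \<partial>A) \<in> borel_measurable (A \<Otimes>\<^sub>M Q)"
      using h by measurable
  qed
  finally show ?thesis .
qed

lemma nn_triple_meas:
  assumes A: "prob_space A" and Q: "prob_space Q"
    and h: "h \<in> borel_measurable (A \<Otimes>\<^sub>M (A \<Otimes>\<^sub>M Q))"
    and Q': "sets Q' = sets Q"
  shows "(\<lambda>w. (\<integral>\<^sup>+ x. (\<integral>\<^sup>+ y. h (x, y, w) \<partial>A) \<partial>A)) \<in> borel_measurable Q'"
proof -
  interpret A: prob_space A by (rule A)
  have "(\<lambda>w. (\<integral>\<^sup>+ x. (\<integral>\<^sup>+ y. h (x, y, w) \<partial>A) \<partial>A)) \<in> borel_measurable Q"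
    using h by measurable
  then show ?thesis using Q' by (simp cong: measurable_cong_sets)
qed

locale mainset = clset M R \<rho> D for M :: "'a measure" and R \<rho> D +
  fixes \<phi> :: "real^'k \<Rightarrow> real" and f :: "'a \<Rightarrow> real^'d" and B :: real
  assumes R2: "R \<ge> 2"
    and f_meas: "f \<in> borel_measurable M"
    and phi_meas: "\<phi> \<in> borel_measurable borel"
    and phi_nonneg: "\<And>v. \<phi> v \<ge> 0"
    and loss_bounded: "\<And>x xp xn. x \<in> space M \<Longrightarrow> xp \<in> space M \<Longrightarrow> (\<And>i. xn i \<in> space M) \<Longrightarrow> closs \<phi> f x xp xn \<le> B"
begin

definition cl :: "'a \<times> 'a \<times> ('k \<Rightarrow> 'a) \<Rightarrow> real" where
  "cl z = closs \<phi> f (fst z) (fst (snd z)) (snd (snd z))"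

lemma closs_nonneg: "closs \<phi> f x xp xn \<ge> 0"
  by (simp add: closs_def phi_nonneg)

lemma cl_nonneg: "cl z \<ge> 0" by (simp add: cl_def closs_nonneg)

lemma cl_meas:
  assumes "sets A1 = sets M" "sets A2 = sets M" "sets Q = sets (PiM (UNIV :: 'k set) (\<lambda>_. M))"
  shows "cl \<in> borel_measurable (A1 \<Otimes>\<^sub>M (A2 \<Otimes>\<^sub>M Q))"
proof -
  have S: "sets (A1 \<Otimes>\<^sub>M (A2 \<Otimes>\<^sub>M Q)) = sets (M \<Otimes>\<^sub>M (M \<Otimes>\<^sub>M PiM (UNIV :: 'k set) (\<lambda>_. M)))"
    using assms by (intro sets_pair_measure_cong) auto
  have "cl \<in> borel_measurable (M \<Otimes>\<^sub>M (M \<Otimes>\<^sub>M PiM (UNIV :: 'k set) (\<lambda>_. M)))"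
    unfolding cl_def
    by (rule closs_measurable[OF phi_meas f_meas]) measurable
  then show ?thesis by (subst measurable_cong_sets[OF S refl])
qed

lemma cl_bound:
  assumes "sets A1 = sets M" "sets A2 = sets M" "sets Q = sets (PiM (UNIV :: 'k set) (\<lambda>_. M))"
    and "z \<in> space (A1 \<Otimes>\<^sub>M (A2 \<Otimes>\<^sub>M Q))"
  shows "cl z \<le> B"
proof -
  have sp: "space A1 = space M" "space A2 = space M" "space Q = space (PiM (UNIV :: 'k set) (\<lambda>_. M))"
    using assms(1-3) sets_eq_imp_space_eq by metis+
  show ?thesis using assms(4) unfolding cl_def
    by (intro loss_bounded) (auto simp: space_pair_measure sp space_PiM PiE_iff)
qed

lemma nn_cl_finite:
  assumes "prob_space A1" "prob_space A2" "prob_space Q"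
    "sets A1 = sets M" "sets A2 = sets M" "sets Q = sets (PiM (UNIV :: 'k set) (\<lambda>_. M))"
  shows "(\<integral>\<^sup>+ z. ennreal (cl z) \<partial>(A1 \<Otimes>\<^sub>M (A2 \<Otimes>\<^sub>M Q))) < top"
proof -
  interpret A2Q: pair_prob_space A2 Q using assms by (simp add: pair_prob_space_def pair_sigma_finite_def prob_space_imp_sigma_finite)
  interpret P: pair_prob_space A1 "A2 \<Otimes>\<^sub>M Q" using assms A2Q.prob_space_axioms by (simp add: pair_prob_space_def pair_sigma_finite_def prob_space_imp_sigma_finite)
  have "(\<integral>\<^sup>+ z. ennreal (cl z) \<partial>(A1 \<Otimes>\<^sub>M (A2 \<Otimes>\<^sub>M Q))) \<le> (\<integral>\<^sup>+ z. ennreal B \<partial>(A1 \<Otimes>\<^sub>M (A2 \<Otimes>\<^sub>M Q)))"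
    using cl_bound[OF assms(4-6)] by (intro nn_integral_mono) (auto intro: ennreal_leI)
  also have "\<dots> = ennreal B" by (simp add: P.emeasure_space_1)
  finally show ?thesis by (simp add: le_less_trans)
qed

lemma pop_inner:
  "(\<integral>z. cl z \<partial>(D r \<Otimes>\<^sub>M (D r \<Otimes>\<^sub>M PiM (UNIV :: 'k set) (\<lambda>_. mix))))
    = (\<Sum>s\<in>(UNIV :: 'k set) \<rightarrow>\<^sub>E {..<R}. (\<Prod>i\<in>UNIV. \<rho> (s i)) * (\<integral>z. cl z \<partial>(D r \<Otimes>\<^sub>M (D r \<Otimes>\<^sub>M PiM UNIV (\<lambda>i. D (s i))))))"
proof -
  let ?G = "\<lambda>w. (\<integral>\<^sup>+ x. (\<integral>\<^sup>+ y. ennreal (cl (x, y, w)) \<partial>D r) \<partial>D r)"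
  let ?QM = "PiM (UNIV :: 'k set) (\<lambda>_. mix)"
  let ?QS = "\<lambda>s. PiM (UNIV :: 'k set) (\<lambda>i. D (s i))"
  have pQM: "prob_space ?QM" using mix_prob by (intro prob_space_PiM) auto
  have pQS: "prob_space (?QS s)" for s using D_prob by (intro prob_space_PiM) auto
  have sQM: "sets ?QM = sets (PiM (UNIV :: 'k set) (\<lambda>_. M))" by (rule PiM_mix_sets)
  have sQS: "sets (?QS s) = sets (PiM (UNIV :: 'k set) (\<lambda>_. M))" for s by (rule PiM_D_sets)
  have hM: "(\<lambda>z. ennreal (cl z)) \<in> borel_measurable (D r \<Otimes>\<^sub>M (D r \<Otimes>\<^sub>M Q))"
    if "sets Q = sets (PiM (UNIV :: 'k set) (\<lambda>_. M))" for Q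
    using cl_meas[OF D_sets D_sets that] by measurable
  have Gm: "?G \<in> borel_measurable (PiM (UNIV :: 'k set) (\<lambda>_. M))"
    using nn_triple_meas[OF D_prob pQM hM[OF sQM] sQM[symmetric]] .
  have "(\<integral>\<^sup>+ z. ennreal (cl z) \<partial>(D r \<Otimes>\<^sub>M (D r \<Otimes>\<^sub>M ?QM))) = integral\<^sup>N ?QM ?G"
    using nn_triple[OF D_prob pQM hM[OF sQM]] by simp
  also have "\<dots> = (\<Sum>s\<in>(UNIV :: 'k set) \<rightarrow>\<^sub>E {..<R}. ennreal (\<Prod>i\<in>UNIV. \<rho> (s i)) * integral\<^sup>N (?QS s) ?G)"
    by (rule nn_integral_PiM_mix[OF _ Gm]) simp
  also have "\<dots> = (\<Sum>s\<in>(UNIV :: 'k set) \<rightarrow>\<^sub>E {..<R}. ennreal (\<Prod>i\<in>UNIV. \<rho> (s i)) * (\<integral>\<^sup>+ z. ennreal (cl z) \<partial>(D r \<Otimes>\<^sub>M (D r \<Otimes>\<^sub>M ?QS s))))"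
    using nn_triple[OF D_prob pQS hM[OF sQS]] by simp
  finally have eq: "(\<integral>\<^sup>+ z. ennreal (cl z) \<partial>(D r \<Otimes>\<^sub>M (D r \<Otimes>\<^sub>M ?QM))) = \<dots>" .
  have fin: "(\<integral>\<^sup>+ z. ennreal (cl z) \<partial>(D r \<Otimes>\<^sub>M (D r \<Otimes>\<^sub>M ?QS s))) < top" for s
    by (rule nn_cl_finite[OF D_prob D_prob pQS D_sets D_sets sQS])
  have rpos: "s \<in> (UNIV :: 'k set) \<rightarrow>\<^sub>E {..<R} \<Longrightarrow> 0 \<le> (\<Prod>i\<in>UNIV. \<rho> (s i))" for s
    using rho_pos by (intro prod_nonneg) (auto intro: less_imp_le)
  have "(\<integral>z. cl z \<partial>(D r \<Otimes>\<^sub>M (D r \<Otimes>\<^sub>M ?QM))) = enn2real (\<integral>\<^sup>+ z. ennreal (cl z) \<partial>(D r \<Otimes>\<^sub>M (D r \<Otimes>\<^sub>M ?QM)))"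
    using cl_meas[OF D_sets D_sets sQM] cl_nonneg by (intro integral_eq_nn_integral) auto
  also have "\<dots> = (\<Sum>s\<in>(UNIV :: 'k set) \<rightarrow>\<^sub>E {..<R}. enn2real (ennreal (\<Prod>i\<in>UNIV. \<rho> (s i)) * (\<integral>\<^sup>+ z. ennreal (cl z) \<partial>(D r \<Otimes>\<^sub>M (D r \<Otimes>\<^sub>M ?QS s)))))"
    unfolding eq using fin by (subst enn2real_sum) (auto simp: ennreal_mult_less_top)
  also have "\<dots> = (\<Sum>s\<in>(UNIV :: 'k set) \<rightarrow>\<^sub>E {..<R}. (\<Prod>i\<in>UNIV. \<rho> (s i)) * (\<integral>z. cl z \<partial>(D r \<Otimes>\<^sub>M (D r \<Otimes>\<^sub>M ?QS s))))"
  proof (rule sum.cong[OF refl])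
    fix s :: "'k \<Rightarrow> nat" assume s: "s \<in> UNIV \<rightarrow>\<^sub>E {..<R}"
    have "(\<integral>z. cl z \<partial>(D r \<Otimes>\<^sub>M (D r \<Otimes>\<^sub>M ?QS s))) = enn2real (\<integral>\<^sup>+ z. ennreal (cl z) \<partial>(D r \<Otimes>\<^sub>M (D r \<Otimes>\<^sub>M ?QS s)))"
      using cl_meas[OF D_sets D_sets sQS] cl_nonneg by (intro integral_eq_nn_integral) auto
    then show "enn2real (ennreal (\<Prod>i\<in>UNIV. \<rho> (s i)) * (\<integral>\<^sup>+ z. ennreal (cl z) \<partial>(D r \<Otimes>\<^sub>M (D r \<Otimes>\<^sub>M ?QS s))))
       = (\<Prod>i\<in>UNIV. \<rho> (s i)) * (\<integral>z. cl z \<partial>(D r \<Otimes>\<^sub>M (D r \<Otimes>\<^sub>M ?QS s)))"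
      using rpos[OF s] by (simp add: enn2real_mult)
  qed
  finally show ?thesis .
qed

end

context mainset
begin

definition Fv :: "nat \<Rightarrow> nat \<Rightarrow> ('k \<Rightarrow> nat) \<Rightarrow> real" where
  "Fv r1 r2 s = (\<integral>z. cl z \<partial>(D r1 \<Otimes>\<^sub>M (D r2 \<Otimes>\<^sub>M PiM UNIV (\<lambda>i. D (s i)))))"

definition Lr :: "nat \<Rightarrow> real" where
  "Lr r = (\<Sum>s\<in>(UNIV :: 'k set) \<rightarrow>\<^sub>E {..<R}. (\<Prod>i\<in>UNIV. \<rho> (s i)) * Fv r r s)"

lemma pop_risk_eq: "pop_risk M R \<rho> D \<phi> f = (\<Sum>r<R. \<rho> r * Lr r)"
proof -
  have "(\<lambda>z. closs \<phi> f (fst z) (fst (snd z)) (snd (snd z))) = cl" by (simp add: cl_def fun_eq_iff)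
  then show ?thesis unfolding pop_risk_def Lr_def Fv_def using pop_inner by simp
qed

lemma Fv_nonneg: "Fv r1 r2 s \<ge> 0"
  unfolding Fv_def by (rule integral_nonneg_AE) (simp add: cl_nonneg)

lemma Lr_nonneg: "Lr r \<ge> 0"
  unfolding Lr_def using rho_pos
  by (intro sum_nonneg mult_nonneg_nonneg prod_nonneg Fv_nonneg) (auto intro: less_imp_le)

lemma comp_meas_D:
  "j \<in> J \<Longrightarrow> (\<lambda>xs. xs j) \<in> measurable (PiM J (\<lambda>j. D (ys j))) M"
  using measurable_component_singleton[of j J "\<lambda>j. D (ys j)"]
  by (simp cong: measurable_cong_sets add: D_sets)

lemma closs_pick_meas:
  assumes "a \<in> J" "b \<in> J" "range c \<subseteq> J"
  shows "(\<lambda>xs. closs \<phi> f (xs a) (xs b) (xs \<circ> c)) \<in> borel_measurable (PiM J (\<lambda>j. D (ys j)))"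
proof -
  have "\<And>i. c i \<in> J" using assms(3) by auto
  then show ?thesis
    using assms by (intro closs_measurable[OF phi_meas f_meas] comp_meas_D) (auto simp: comp_def intro!: comp_meas_D)
qed

lemma closs_pick_integrable:
  assumes "a \<in> J" "b \<in> J" "range c \<subseteq> J"
  shows "integrable (PiM J (\<lambda>j. D (ys j))) (\<lambda>xs. closs \<phi> f (xs a) (xs b) (xs \<circ> c))"
proof -
  interpret P: prob_space "PiM J (\<lambda>j. D (ys j))" using D_prob by (intro prob_space_PiM) auto
  show ?thesis
  proof (rule P.integrable_const_bound[where B=B])
    show "AE xs in PiM J (\<lambda>j. D (ys j)). norm (closs \<phi> f (xs a) (xs b) (xs \<circ> c)) \<le> B"
    proof -
      have "\<And>i. c i \<in> J" using assms(3) by auto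
      then show ?thesis
        using assms by (intro AE_I2) (auto simp: closs_nonneg space_PiM PiE_iff D_space intro!: loss_bounded)
    qed
  qed (rule closs_pick_meas[OF assms])
qed

lemma closs_pick_integral:
  fixes c :: "'k \<Rightarrow> nat"
  assumes J: "finite J" "a \<in> J" "b \<in> J" "a \<noteq> b" and c: "range c \<subseteq> J - {a, b}" "inj c"
  shows "(\<integral>xs. closs \<phi> f (xs a) (xs b) (xs \<circ> c) \<partial>PiM J (\<lambda>j. D (ys j))) = Fv (ys a) (ys b) (ys \<circ> c)"
proof -
  let ?P = "PiM (UNIV :: 'k set) (\<lambda>i. D (ys (c i)))"
  have sP: "sets ?P = sets (PiM (UNIV :: 'k set) (\<lambda>_. M))" by (rule PiM_D_sets)
  have clM: "cl \<in> borel_measurable (M \<Otimes>\<^sub>M (M \<Otimes>\<^sub>M PiM (UNIV :: 'k set) (\<lambda>_. M)))"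
    by (rule cl_meas) auto
  have g: "(\<lambda>z. ennreal (cl z)) \<in> borel_measurable (M \<Otimes>\<^sub>M (M \<Otimes>\<^sub>M PiM (UNIV :: 'k set) (\<lambda>_. M)))"
    using clM by measurable
  have nn: "(\<integral>\<^sup>+ xs. ennreal (cl (xs a, xs b, xs \<circ> c)) \<partial>PiM J (\<lambda>j. D (ys j)))
       = (\<integral>\<^sup>+ z. ennreal (cl z) \<partial>(D (ys a) \<Otimes>\<^sub>M (D (ys b) \<Otimes>\<^sub>M ?P)))"
    using nn_integral_PiM_pick[OF D_prob D_sets J c(1) c(2) g] by simp
  have "(\<integral>xs. closs \<phi> f (xs a) (xs b) (xs \<circ> c) \<partial>PiM J (\<lambda>j. D (ys j)))
      = enn2real (\<integral>\<^sup>+ xs. ennreal (cl (xs a, xs b, xs \<circ> c)) \<partial>PiM J (\<lambda>j. D (ys j)))"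
    using closs_pick_meas[of a J b c ys] J c closs_nonneg
    by (subst integral_eq_nn_integral) (auto simp: cl_def)
  also have "\<dots> = enn2real (\<integral>\<^sup>+ z. ennreal (cl z) \<partial>(D (ys a) \<Otimes>\<^sub>M (D (ys b) \<Otimes>\<^sub>M ?P)))"
    by (simp only: nn)
  also have "\<dots> = Fv (ys a) (ys b) (ys \<circ> c)"
    unfolding Fv_def using cl_meas[OF D_sets D_sets sP] cl_nonneg
    by (subst integral_eq_nn_integral) (auto simp: comp_def)
  finally show ?thesis .
qed

end

context mainset
begin

definition Cs :: "nat \<Rightarrow> (nat \<Rightarrow> nat) \<Rightarrow> ('k \<Rightarrow> nat) set" where
  "Cs N \<pi> = {c. inj c \<and> range c \<subseteq> {..<N} - Ipi CARD('k) N \<pi>}"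

definition Pr :: "nat \<Rightarrow> (nat \<Rightarrow> nat) \<Rightarrow> (nat \<Rightarrow> nat) \<Rightarrow> nat \<Rightarrow> (nat \<times> nat) set" where
  "Pr N ys \<pi> r = {(a, b). a \<in> Ipi CARD('k) N \<pi> \<and> b \<in> Ipi CARD('k) N \<pi> \<and> a \<noteq> b \<and> ys a = r \<and> ys b = r}"

lemma Omega_eq:
  "(Omega_pi N ys \<pi> r :: (nat \<times> nat \<times> ('k \<Rightarrow> nat)) set)
    = (\<lambda>((a, b), c). (a, b, c)) ` (Pr N ys \<pi> r \<times> Cs N \<pi>)"
proof (rule set_eqI)
  fix t :: "nat \<times> nat \<times> ('k \<Rightarrow> nat)"
  obtain a b c where t: "t = (a, b, c)" by (cases t) auto
  have "t \<in> (\<lambda>((a, b), c). (a, b, c)) ` (Pr N ys \<pi> r \<times> Cs N \<pi>) \<longleftrightarrow> (a, b) \<in> Pr N ys \<pi> r \<and> c \<in> Cs N \<pi>"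
    unfolding t by force
  also have "\<dots> \<longleftrightarrow> t \<in> Omega_pi N ys \<pi> r"
    unfolding t Omega_pi_def Pr_def Cs_def Let_def by blast
  finally show "t \<in> Omega_pi N ys \<pi> r \<longleftrightarrow> t \<in> (\<lambda>((a, b), c). (a, b, c)) ` (Pr N ys \<pi> r \<times> Cs N \<pi>)" by simp
qed

lemma inj_assoc: "inj_on (\<lambda>((a::nat, b::nat), c::'k \<Rightarrow> nat). (a, b, c)) X"
  by (auto simp: inj_on_def)

context
  fixes N :: nat
  assumes nR: "R < half_size CARD('k) N"
begin


lemma k_pos: "CARD('k) \<ge> 1"
  by (simp add: Suc_leI)

lemma q_ge2: "N div (CARD('k) + 2) \<ge> 2"
  using nR R2 unfolding half_size_def by linarith

lemma n_le: "half_size CARD('k) N + CARD('k) \<le> N"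
proof -
  define q where "q = N div (CARD('k) + 2)"
  have "q * (CARD('k) + 2) \<le> N" unfolding q_def by (rule div_times_less_eq_dividend)
  moreover have "q \<ge> 2" using q_ge2 by (simp add: q_def)
  moreover have "2 * q + CARD('k) \<le> q * (CARD('k) + 2)"
  proof -
    have "CARD('k) \<le> q * CARD('k)" using \<open>q \<ge> 2\<close> by simp
    then show ?thesis by (simp add: algebra_simps)
  qed
  ultimately have "2 * q + CARD('k) \<le> N" by linarith
  then show ?thesis by (simp add: half_size_def q_def)
qed

lemma nn_pos: "half_size CARD('k) N > 0" using nR by simp

context
  fixes \<pi> assumes \<pi>: "\<pi> permutes {..<N}"
begin

lemma I_sub: "Ipi CARD('k) N \<pi> \<subseteq> {..<N}"
proof
  fix x assume "x \<in> Ipi CARD('k) N \<pi>"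
  then obtain y where y: "y < half_size CARD('k) N" "x = \<pi> y" unfolding Ipi_def by auto
  then have "y \<in> {..<N}" using n_le by simp
  then show "x \<in> {..<N}" using y(2) permutes_in_image[OF \<pi>] by simp
qed

lemma card_I: "card (Ipi CARD('k) N \<pi>) = half_size CARD('k) N"
proof -
  have "inj_on \<pi> {..<half_size CARD('k) N}"
    by (rule inj_on_subset[OF permutes_inj[OF \<pi>] subset_UNIV])
  then show ?thesis unfolding Ipi_def by (simp add: card_image)
qed

lemma finite_I: "finite (Ipi CARD('k) N \<pi>)" unfolding Ipi_def by simp

lemma Cs_finite: "finite (Cs N \<pi>)"
proof (rule finite_subset)
  show "Cs N \<pi> \<subseteq> (UNIV :: 'k set) \<rightarrow>\<^sub>E ({..<N} - Ipi CARD('k) N \<pi>)"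
    unfolding Cs_def by (auto simp: PiE_iff)
  show "finite ((UNIV :: 'k set) \<rightarrow>\<^sub>E ({..<N} - Ipi CARD('k) N \<pi>))" by (simp add: finite_PiE)
qed

lemma Cs_ne: "Cs N \<pi> \<noteq> {}"
proof -
  have "card ({..<N} - Ipi CARD('k) N \<pi>) = N - half_size CARD('k) N"
    using I_sub card_I by (simp add: card_Diff_subset finite_I)
  then have "card (UNIV :: 'k set) \<le> card ({..<N} - Ipi CARD('k) N \<pi>)" using n_le by simp
  then obtain c :: "'k \<Rightarrow> nat" where "c ` UNIV \<subseteq> {..<N} - Ipi CARD('k) N \<pi>" "inj_on c UNIV"
    using card_le_inj[of "UNIV :: 'k set" "{..<N} - Ipi CARD('k) N \<pi>"] by auto
  then have "c \<in> Cs N \<pi>" unfolding Cs_def by auto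
  then show ?thesis by auto
qed

lemma Pr_finite: "finite (Pr N ys \<pi> r)"
proof (rule finite_subset)
  show "Pr N ys \<pi> r \<subseteq> Ipi CARD('k) N \<pi> \<times> Ipi CARD('k) N \<pi>" unfolding Pr_def by auto
qed (simp add: finite_I)


lemma U_integral:
  "(\<integral>xs. U_Omega \<phi> f N xs ys \<pi> r \<partial>PiM {..<N} (\<lambda>j. D (ys j)))
    = (if Pr N ys \<pi> r = {} then 0 else (\<Sum>c\<in>Cs N \<pi>. Fv r r (ys \<circ> c)) / real (card (Cs N \<pi>)))"
proof -
  let ?T = "(Omega_pi N ys \<pi> r :: (nat \<times> nat \<times> ('k \<Rightarrow> nat)) set)"
  let ?P = "PiM {..<N} (\<lambda>j. D (ys j))"
  have U: "U_Omega \<phi> f N xs ys \<pi> r = (if ?T = {} then 0 else (\<Sum>(a, b, c)\<in>?T. closs \<phi> f (xs a) (xs b) (xs \<circ> c)) / real (card ?T))" for xs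
    unfolding U_Omega_def Let_def by simp
  have Tin: "a \<in> {..<N} \<and> b \<in> {..<N} \<and> a \<noteq> b \<and> range c \<subseteq> {..<N} - {a, b} \<and> inj c \<and> ys a = r \<and> ys b = r"
    if "(a, b, c) \<in> ?T" for a b c
    using that I_sub unfolding Omega_pi_def Let_def by auto
  show ?thesis
  proof (cases "Pr N ys \<pi> r = {}")
    case True
    then have "?T = {}" unfolding Omega_eq by simp
    then show ?thesis using True by (simp add: U)
  next
    case False
    have Tne: "?T \<noteq> {}" unfolding Omega_eq using False Cs_ne by simp
    have cardT: "card ?T = card (Pr N ys \<pi> r) * card (Cs N \<pi>)"
      unfolding Omega_eq by (simp add: card_image[OF inj_assoc] card_cartesian_product)
    have finT: "finite ?T" unfolding Omega_eq using Pr_finite Cs_finite by simp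
    have "(\<integral>xs. U_Omega \<phi> f N xs ys \<pi> r \<partial>?P)
        = (\<integral>xs. (\<Sum>(a, b, c)\<in>?T. closs \<phi> f (xs a) (xs b) (xs \<circ> c)) \<partial>?P) / real (card ?T)"
      using Tne by (simp add: U)
    also have "(\<integral>xs. (\<Sum>(a, b, c)\<in>?T. closs \<phi> f (xs a) (xs b) (xs \<circ> c)) \<partial>?P)
        = (\<Sum>t\<in>?T. (\<integral>xs. (case t of (a, b, c) \<Rightarrow> closs \<phi> f (xs a) (xs b) (xs \<circ> c)) \<partial>?P))"
    proof -
      have isum: "\<And>h :: (nat \<times> nat \<times> ('k \<Rightarrow> nat)) \<Rightarrow> (nat \<Rightarrow> 'a) \<Rightarrow> real. (\<And>t. t \<in> ?T \<Longrightarrow> integrable ?P (h t)) \<Longrightarrow> (\<integral>xs. (\<Sum>t\<in>?T. h t xs) \<partial>?P) = (\<Sum>t\<in>?T. \<integral>xs. h t xs \<partial>?P)"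
        by (rule Bochner_Integration.integral_sum)
      show ?thesis
      proof (rule isum)
      fix t assume t: "t \<in> ?T"
      obtain a b c where abc: "t = (a, b, c)" by (cases t) auto
      show "integrable ?P (\<lambda>xs. case t of (a, b, c) \<Rightarrow> closs \<phi> f (xs a) (xs b) (xs \<circ> c))"
        using Tin[of a b c] t abc by (auto intro!: closs_pick_integrable)
    qed
    qed
    also have "\<dots> = (\<Sum>t\<in>?T. Fv r r (ys \<circ> snd (snd t)))"
    proof (rule sum.cong[OF refl])
      fix t assume t: "t \<in> ?T"
      obtain a b c where abc: "t = (a, b, c)" by (cases t) auto
      show "(\<integral>xs. (case t of (a, b, c) \<Rightarrow> closs \<phi> f (xs a) (xs b) (xs \<circ> c)) \<partial>?P) = Fv r r (ys \<circ> snd (snd t))"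
        using Tin[of a b c] t abc closs_pick_integral[of "{..<N}" a b c ys] by auto
    qed
    also have "\<dots> = (\<Sum>x\<in>Pr N ys \<pi> r \<times> Cs N \<pi>. Fv r r (ys \<circ> snd x))"
      unfolding Omega_eq by (subst sum.reindex[OF inj_assoc]) (auto intro!: sum.cong simp: case_prod_beta)
    also have "\<dots> = real (card (Pr N ys \<pi> r)) * (\<Sum>c\<in>Cs N \<pi>. Fv r r (ys \<circ> c))"
    proof -
      have "(\<Sum>a\<in>Pr N ys \<pi> r. \<Sum>c\<in>Cs N \<pi>. Fv r r (ys \<circ> c)) = (\<Sum>(a, c)\<in>Pr N ys \<pi> r \<times> Cs N \<pi>. Fv r r (ys \<circ> c))"
        by (rule sum.cartesian_product)
      also have "(\<lambda>(a::nat \<times> nat, c). Fv r r (ys \<circ> c)) = (\<lambda>x. Fv r r (ys \<circ> snd x))" by auto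
      finally show ?thesis by (simp add: comp_def)
    qed
    finally show ?thesis
      using False Pr_finite Cs_ne Cs_finite by (simp add: cardT)
  qed
qed

end
end
end

context mainset
begin

definition Wt :: "nat \<Rightarrow> (nat \<Rightarrow> nat) \<Rightarrow> nat \<Rightarrow> real" where
  "Wt N \<pi> r = (\<Sum>ys\<in>{..<N} \<rightarrow>\<^sub>E {..<R}. (\<Prod>j<N. \<rho> (ys j)) * omega_w R CARD('k) N ys \<pi> r)"

lemma omega_local:
  assumes "\<And>j. j \<in> Ipi k N \<pi> \<Longrightarrow> ys j = ys' j"
  shows "omega_w R k N ys \<pi> r = omega_w R k N ys' \<pi> r"
proof -
  have "{j \<in> Ipi k N \<pi>. ys j = q} = {j \<in> Ipi k N \<pi>. ys' j = q}" for q
    using assms by auto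
  then have "npi k N ys \<pi> q = npi k N ys' \<pi> q" for q
    unfolding npi_def by simp
  then show ?thesis unfolding omega_w_def by simp
qed

lemma omega_zero_aux:
  assumes "Pr N ys \<pi> r = {}" and fin: "finite (Ipi CARD('k) N \<pi>)"
  shows "omega_w R CARD('k) N ys \<pi> r = 0"
proof -
  let ?S = "{j \<in> Ipi CARD('k) N \<pi>. ys j = r}"
  have f: "finite ?S" using fin by simp
  have "\<forall>a1\<in>?S. \<forall>a2\<in>?S. a1 = a2"
  proof (intro ballI)
    fix a1 a2 assume "a1 \<in> ?S" "a2 \<in> ?S"
    then have "a1 \<noteq> a2 \<Longrightarrow> (a1, a2) \<in> Pr N ys \<pi> r" unfolding Pr_def by simp
    then show "a1 = a2" using assms by blast
  qed
  then have "card ?S \<le> Suc 0" using card_le_Suc0_iff_eq[OF f] by blast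
  then have "npi CARD('k) N ys \<pi> r div 2 = 0" unfolding npi_def by simp
  then show ?thesis unfolding omega_w_def Let_def by simp
qed

lemma T_eq:
  assumes nR: "R < half_size CARD('k) N" and \<pi>: "\<pi> permutes {..<N}"
  shows "(\<Sum>ys\<in>{..<N} \<rightarrow>\<^sub>E {..<R}. (\<Prod>j<N. \<rho> (ys j)) * (omega_w R CARD('k) N ys \<pi> r *
      (\<integral>xs. U_Omega \<phi> f N xs ys \<pi> r \<partial>PiM {..<N} (\<lambda>j. D (ys j)))))
   = Wt N \<pi> r * Lr r"
proof -
  let ?C = "Cs N \<pi>"
  let ?w = "\<lambda>ys. omega_w R CARD('k) N ys \<pi> r"
  have Cfin: "finite ?C" and Cne: "?C \<noteq> {}" using Cs_finite[OF nR \<pi>] Cs_ne[OF nR \<pi>] by auto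
  have step1: "?w ys * (\<integral>xs. U_Omega \<phi> f N xs ys \<pi> r \<partial>PiM {..<N} (\<lambda>j. D (ys j)))
      = (\<Sum>c\<in>?C. ?w ys * Fv r r (ys \<circ> c)) / real (card ?C)" for ys
  proof (cases "Pr N ys \<pi> r = {}")
    case True
    then show ?thesis using omega_zero_aux[OF True finite_I[OF nR \<pi>]] by simp
  next
    case False
    then show ?thesis unfolding U_integral[OF nR \<pi>, of ys r] by (simp add: sum_distrib_left)
  qed
  have "(\<Sum>ys\<in>{..<N} \<rightarrow>\<^sub>E {..<R}. (\<Prod>j<N. \<rho> (ys j)) * (?w ys *
      (\<integral>xs. U_Omega \<phi> f N xs ys \<pi> r \<partial>PiM {..<N} (\<lambda>j. D (ys j)))))
    = (\<Sum>c\<in>?C. \<Sum>ys\<in>{..<N} \<rightarrow>\<^sub>E {..<R}. (\<Prod>j<N. \<rho> (ys j)) * ?w ys * Fv r r (ys \<circ> c)) / real (card ?C)"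
  proof -
    have "(\<Sum>ys\<in>{..<N} \<rightarrow>\<^sub>E {..<R}. (\<Prod>j<N. \<rho> (ys j)) * (?w ys *
      (\<integral>xs. U_Omega \<phi> f N xs ys \<pi> r \<partial>PiM {..<N} (\<lambda>j. D (ys j)))))
      = (\<Sum>ys\<in>{..<N} \<rightarrow>\<^sub>E {..<R}. \<Sum>c\<in>?C. (\<Prod>j<N. \<rho> (ys j)) * ?w ys * Fv r r (ys \<circ> c)) / real (card ?C)"
      unfolding step1 sum_divide_distrib by (intro sum.cong refl) (simp add: sum_distrib_left mult.assoc)
    also have "\<dots> = (\<Sum>c\<in>?C. \<Sum>ys\<in>{..<N} \<rightarrow>\<^sub>E {..<R}. (\<Prod>j<N. \<rho> (ys j)) * ?w ys * Fv r r (ys \<circ> c)) / real (card ?C)"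
      by (subst sum.swap) (rule refl)
    finally show ?thesis .
  qed
  also have "\<dots> = (\<Sum>c\<in>?C. Wt N \<pi> r * Lr r) / real (card ?C)"
  proof (intro arg_cong2[where f="(/)"] sum.cong refl)
    fix c assume c: "c \<in> ?C"
    have ci: "inj c" "range c \<subseteq> {..<N}" using c unfolding Cs_def by auto
    have "(\<Sum>ys\<in>{..<N} \<rightarrow>\<^sub>E {..<R}. (\<Prod>j\<in>{..<N}. \<rho> (ys j)) * ?w ys * Fv r r (ys \<circ> c))
        = (\<Sum>ys\<in>{..<N} \<rightarrow>\<^sub>E {..<R}. (\<Prod>j\<in>{..<N}. \<rho> (ys j)) * ?w ys) *
          (\<Sum>s\<in>UNIV \<rightarrow>\<^sub>E {..<R}. (\<Prod>i\<in>UNIV. \<rho> (s i)) * Fv r r s)"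
    proof (rule sum_indep[OF _ ci rho_sum])
      fix ys ys' assume "\<And>j. j \<in> {..<N} - range c \<Longrightarrow> (ys :: nat \<Rightarrow> nat) j = ys' j"
      moreover have "Ipi CARD('k) N \<pi> \<subseteq> {..<N} - range c" using c I_sub[OF nR \<pi>] unfolding Cs_def by auto
      ultimately show "?w ys = ?w ys'" by (intro omega_local) auto
    qed simp
    then show "(\<Sum>ys\<in>{..<N} \<rightarrow>\<^sub>E {..<R}. (\<Prod>j<N. \<rho> (ys j)) * ?w ys * Fv r r (ys \<circ> c)) = Wt N \<pi> r * Lr r"
      unfolding Wt_def Lr_def by simp
  qed
  also have "\<dots> = Wt N \<pi> r * Lr r" using Cne Cfin by simp
  finally show ?thesis .
qed

end

context mainset
begin

lemma npi_real: "real (npi k N ys \<pi> r) = (\<Sum>j\<in>Ipi k N \<pi>. if ys j = r then 1 else 0)"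
proof -
  have fin: "finite (Ipi k N \<pi>)" unfolding Ipi_def by simp
  have "npi k N ys \<pi> r = (\<Sum>j\<in>{j \<in> Ipi k N \<pi>. ys j = r}. 1)" unfolding npi_def by simp
  also have "\<dots> = (\<Sum>j\<in>Ipi k N \<pi>. if ys j = r then 1 else 0)" using fin by (rule sum.inter_filter)
  finally have "real (npi k N ys \<pi> r) = (\<Sum>j\<in>Ipi k N \<pi>. real (if ys j = r then 1 else 0::nat))" by (simp only: of_nat_sum)
  also have "\<dots> = (\<Sum>j\<in>Ipi k N \<pi>. if ys j = r then 1 else 0)" by (intro sum.cong) auto
  finally show ?thesis .
qed

lemma sum_npi:
  assumes ys: "ys \<in> {..<N} \<rightarrow>\<^sub>E {..<R}" and I: "Ipi k N \<pi> \<subseteq> {..<N}"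
  shows "(\<Sum>q<R. real (npi k N ys \<pi> q)) = real (card (Ipi k N \<pi>))"
proof -
  have "(\<Sum>q<R. real (npi k N ys \<pi> q)) = (\<Sum>q<R. \<Sum>j\<in>Ipi k N \<pi>. if ys j = q then 1 else 0)"
    by (simp add: npi_real)
  also have "\<dots> = (\<Sum>j\<in>Ipi k N \<pi>. \<Sum>q<R. if ys j = q then 1 else 0)" by (rule sum.swap)
  also have "\<dots> = (\<Sum>j\<in>Ipi k N \<pi>. 1)"
  proof (rule sum.cong[OF refl])
    fix j assume "j \<in> Ipi k N \<pi>"
    then have "ys j < R" using ys I by auto
    then show "(\<Sum>q<R. if ys j = q then 1 else 0) = (1::real)" by (simp add: sum.delta)
  qed
  finally show ?thesis by simp
qed

lemma omega_bounds:
  assumes ys: "ys \<in> {..<N} \<rightarrow>\<^sub>E {..<R}" and I: "Ipi k N \<pi> \<subseteq> {..<N}"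
    and cI: "card (Ipi k N \<pi>) = n" and nR: "R < n"
  shows "omega_w R k N ys \<pi> r \<le> real (npi k N ys \<pi> r) / (real n - real R)"
    and "(real (npi k N ys \<pi> r) - 1) / real n \<le> omega_w R k N ys \<pi> r"
proof -
  define m where "m q = npi k N ys \<pi> q" for q
  define den where "den = (\<Sum>q<R. m q div 2)"
  have msum: "(\<Sum>q<R. real (m q)) = real n" unfolding m_def using sum_npi[OF ys I] cI by simp
  have d1: "2 * real (x div 2) \<ge> real x - 1" for x :: nat by linarith
  have d2: "2 * real (x div 2) \<le> real x" for x :: nat by linarith
  have rden: "real den = (\<Sum>q<R. real (m q div 2))" unfolding den_def by simp
  have den_lo: "2 * real den \<ge> real n - real R"
  proof -
    have "2 * real den = (\<Sum>q<R. 2 * real (m q div 2))" unfolding rden by (simp add: sum_distrib_left)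
    also have "\<dots> \<ge> (\<Sum>q<R. real (m q) - 1)" by (intro sum_mono d1)
    finally show ?thesis using msum by (simp add: sum_subtractf)
  qed
  have den_hi: "2 * real den \<le> real n"
  proof -
    have "2 * real den = (\<Sum>q<R. 2 * real (m q div 2))" unfolding rden by (simp add: sum_distrib_left)
    also have "\<dots> \<le> (\<Sum>q<R. real (m q))" by (intro sum_mono d2)
    finally show ?thesis using msum by simp
  qed
  have dpos: "real den > 0" using den_lo nR by linarith
  then have den0: "den \<noteq> 0" by simp
  have om: "omega_w R k N ys \<pi> r = real (m r div 2) / real den"
    unfolding omega_w_def Let_def m_def den_def using den0 unfolding den_def m_def by simp
  have nRpos: "real n - real R > 0" using nR by simp
  show "omega_w R k N ys \<pi> r \<le> real (npi k N ys \<pi> r) / (real n - real R)"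
  proof -
    have "real (m r div 2) * (real n - real R) \<le> (real (m r) / 2) * (2 * real den)"
      using d2[of "m r"] den_lo nRpos by (intro mult_mono) auto
    then have "real (m r div 2) * (real n - real R) \<le> real (m r) * real den" by simp
    then show ?thesis unfolding om m_def[symmetric] using dpos nRpos
      by (simp add: divide_simps mult.commute)
  qed
  show "(real (npi k N ys \<pi> r) - 1) / real n \<le> omega_w R k N ys \<pi> r"
  proof -
    have "(real (m r) - 1) * real den \<le> real (m r div 2) * real n"
    proof (cases "m r = 0")
      case True then show ?thesis using dpos by simp
    next
      case False
      then have "(real (m r) - 1) * real den \<le> (2 * real (m r div 2)) * (real n / 2)"
        using d1[of "m r"] den_hi dpos by (intro mult_mono) auto
      then show ?thesis by simp
    qed
    then show ?thesis unfolding om m_def[symmetric] using dpos nR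
      by (simp add: divide_simps mult.commute)
  qed
qed

lemma E_npi:
  assumes I: "Ipi k N \<pi> \<subseteq> {..<N}" and r: "r < R"
  shows "(\<Sum>ys\<in>{..<N} \<rightarrow>\<^sub>E {..<R}. (\<Prod>j<N. \<rho> (ys j)) * real (npi k N ys \<pi> r)) = real (card (Ipi k N \<pi>)) * \<rho> r"
proof -
  have "(\<Sum>ys\<in>{..<N} \<rightarrow>\<^sub>E {..<R}. (\<Prod>j<N. \<rho> (ys j)) * real (npi k N ys \<pi> r))
      = (\<Sum>ys\<in>{..<N} \<rightarrow>\<^sub>E {..<R}. \<Sum>j\<in>Ipi k N \<pi>. (\<Prod>j<N. \<rho> (ys j)) * (if ys j = r then 1 else 0))"
    by (simp add: npi_real sum_distrib_left)
  also have "\<dots> = (\<Sum>j\<in>Ipi k N \<pi>. \<Sum>ys\<in>{..<N} \<rightarrow>\<^sub>E {..<R}. (\<Prod>j<N. \<rho> (ys j)) * (if ys j = r then 1 else 0))"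
    by (rule sum.swap)
  also have "\<dots> = (\<Sum>j\<in>Ipi k N \<pi>. \<rho> r)"
  proof (rule sum.cong[OF refl])
    fix j assume "j \<in> Ipi k N \<pi>"
    then have "j \<in> {..<N}" using I by auto
    then show "(\<Sum>ys\<in>{..<N} \<rightarrow>\<^sub>E {..<R}. (\<Prod>j<N. \<rho> (ys j)) * (if ys j = r then 1 else 0)) = \<rho> r"
      using sum_prod_PiE_indicator[OF _ rho_sum, of "{..<N}" j r] r by simp
  qed
  finally show ?thesis by simp
qed

lemma Wt_bounds:
  assumes nR: "R < half_size CARD('k) N" and \<pi>: "\<pi> permutes {..<N}" and r: "r < R"
  shows "Wt N \<pi> r \<le> real (half_size CARD('k) N) * \<rho> r / (real (half_size CARD('k) N) - real R)"
    and "\<rho> r - 1 / real (half_size CARD('k) N) \<le> Wt N \<pi> r"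
proof -
  let ?n = "half_size CARD('k) N"
  have I: "Ipi CARD('k) N \<pi> \<subseteq> {..<N}" by (rule I_sub[OF nR \<pi>])
  have cI: "card (Ipi CARD('k) N \<pi>) = ?n" by (rule card_I[OF nR \<pi>])
  have pnn: "0 \<le> (\<Prod>j<N. \<rho> (ys j))" if "ys \<in> {..<N} \<rightarrow>\<^sub>E {..<R}" for ys
    using that rho_pos by (intro prod_nonneg) (auto intro: less_imp_le)
  have one: "(\<Sum>ys\<in>{..<N} \<rightarrow>\<^sub>E {..<R}. (\<Prod>j<N. \<rho> (ys j))) = 1"
    using sum_prod_PiE_one[OF _ rho_sum, of "{..<N}"] by simp
  have En: "(\<Sum>ys\<in>{..<N} \<rightarrow>\<^sub>E {..<R}. (\<Prod>j<N. \<rho> (ys j)) * real (npi CARD('k) N ys \<pi> r)) = real ?n * \<rho> r"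
    using E_npi[OF I r] cI by simp
  have nRpos: "real ?n - real R > 0" using nR by simp
  have "Wt N \<pi> r \<le> (\<Sum>ys\<in>{..<N} \<rightarrow>\<^sub>E {..<R}. (\<Prod>j<N. \<rho> (ys j)) * (real (npi CARD('k) N ys \<pi> r) / (real ?n - real R)))"
    unfolding Wt_def
    by (intro sum_mono mult_left_mono pnn omega_bounds(1)[OF _ I cI nR])
  also have "\<dots> = (\<Sum>ys\<in>{..<N} \<rightarrow>\<^sub>E {..<R}. (\<Prod>j<N. \<rho> (ys j)) * real (npi CARD('k) N ys \<pi> r)) / (real ?n - real R)"
    by (simp add: sum_divide_distrib)
  finally show "Wt N \<pi> r \<le> real ?n * \<rho> r / (real ?n - real R)" unfolding En .
  have "(\<Sum>ys\<in>{..<N} \<rightarrow>\<^sub>E {..<R}. (\<Prod>j<N. \<rho> (ys j)) * ((real (npi CARD('k) N ys \<pi> r) - 1) / real ?n)) \<le> Wt N \<pi> r"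
    unfolding Wt_def
    by (intro sum_mono mult_left_mono pnn omega_bounds(2)[OF _ I cI nR])
  moreover have "(\<Sum>ys\<in>{..<N} \<rightarrow>\<^sub>E {..<R}. (\<Prod>j<N. \<rho> (ys j)) * ((real (npi CARD('k) N ys \<pi> r) - 1) / real ?n))
      = ((\<Sum>ys\<in>{..<N} \<rightarrow>\<^sub>E {..<R}. (\<Prod>j<N. \<rho> (ys j)) * real (npi CARD('k) N ys \<pi> r)) - (\<Sum>ys\<in>{..<N} \<rightarrow>\<^sub>E {..<R}. (\<Prod>j<N. \<rho> (ys j)))) / real ?n"
    unfolding sum_subtractf[symmetric] sum_divide_distrib
    by (intro sum.cong refl) (simp add: right_diff_distrib diff_divide_distrib)
  ultimately show "\<rho> r - 1 / real ?n \<le> Wt N \<pi> r" unfolding En one using nRpos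
    by (simp add: diff_divide_distrib)
qed

end

context mainset
begin

lemma U_integrable:
  assumes nR: "R < half_size CARD('k) N" and \<pi>: "\<pi> permutes {..<N}"
  shows "integrable (PiM {..<N} (\<lambda>j. D (ys j))) (\<lambda>xs. U_Omega \<phi> f N xs ys \<pi> r)"
proof -
  let ?T = "(Omega_pi N ys \<pi> r :: (nat \<times> nat \<times> ('k \<Rightarrow> nat)) set)"
  let ?P = "PiM {..<N} (\<lambda>j. D (ys j))"
  have U: "(\<lambda>xs. U_Omega \<phi> f N xs ys \<pi> r) = (\<lambda>xs. if ?T = {} then 0 else (\<Sum>t\<in>?T. case t of (a, b, c) \<Rightarrow> closs \<phi> f (xs a) (xs b) (xs \<circ> c)) / real (card ?T))"
    unfolding U_Omega_def Let_def by (simp add: case_prod_beta)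
  have Tin: "a \<in> {..<N} \<and> b \<in> {..<N} \<and> range c \<subseteq> {..<N}"
    if "(a, b, c) \<in> ?T" for a b c
    using that I_sub[OF nR \<pi>] unfolding Omega_pi_def Let_def by auto
  show ?thesis
  proof (cases "?T = {}")
    case True then show ?thesis unfolding U by simp
  next
    case False
    have "integrable ?P (\<lambda>xs. (\<Sum>t\<in>?T. case t of (a, b, c) \<Rightarrow> closs \<phi> f (xs a) (xs b) (xs \<circ> c)))"
    proof (rule Bochner_Integration.integrable_sum)
      fix t assume t: "t \<in> ?T"
      obtain a b c where abc: "t = (a, b, c)" by (cases t) auto
      show "integrable ?P (\<lambda>xs. case t of (a, b, c) \<Rightarrow> closs \<phi> f (xs a) (xs b) (xs \<circ> c))"
        using Tin[of a b c] t abc by (auto intro!: closs_pick_integrable)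
    qed
    then show ?thesis unfolding U using False by simp
  qed
qed

lemma sample_eq:
  assumes nR: "R < half_size CARD('k) N"
  shows "sample_expect R \<rho> D N (Ubar R \<phi> f N)
    = (1 / fact N) * (\<Sum>\<pi>\<in>{\<pi>. \<pi> permutes {..<N}}. \<Sum>r<R. Wt N \<pi> r * Lr r)"
proof -
  let ?Pm = "{\<pi>. \<pi> permutes {..<N}}"
  let ?P = "\<lambda>ys. PiM {..<N} (\<lambda>j. D (ys j))"
  let ?EU = "\<lambda>ys \<pi> r. (\<integral>xs. U_Omega \<phi> f N xs ys \<pi> r \<partial>?P ys)"
  let ?w = "\<lambda>ys \<pi> r. omega_w R CARD('k) N ys \<pi> r"
  have intU: "(\<integral>xs. Ubar R \<phi> f N xs ys \<partial>?P ys) = (1 / fact N) * (\<Sum>\<pi>\<in>?Pm. \<Sum>r<R. ?w ys \<pi> r * ?EU ys \<pi> r)" for ys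
  proof -
    have i1: "integrable (?P ys) (\<lambda>xs. ?w ys \<pi> r * U_Omega \<phi> f N xs ys \<pi> r)" if "\<pi> \<in> ?Pm" for \<pi> r
      using U_integrable[OF nR, of \<pi> ys r] that by simp
    have "(\<integral>xs. Ubar R \<phi> f N xs ys \<partial>?P ys)
       = (1 / fact N) * (\<integral>xs. (\<Sum>\<pi>\<in>?Pm. \<Sum>r<R. ?w ys \<pi> r * U_Omega \<phi> f N xs ys \<pi> r) \<partial>?P ys)"
      unfolding Ubar_def by simp
    also have "(\<integral>xs. (\<Sum>\<pi>\<in>?Pm. \<Sum>r<R. ?w ys \<pi> r * U_Omega \<phi> f N xs ys \<pi> r) \<partial>?P ys)
       = (\<Sum>\<pi>\<in>?Pm. (\<integral>xs. (\<Sum>r<R. ?w ys \<pi> r * U_Omega \<phi> f N xs ys \<pi> r) \<partial>?P ys))"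
      using i1 by (intro Bochner_Integration.integral_sum Bochner_Integration.integrable_sum) auto
    also have "\<dots> = (\<Sum>\<pi>\<in>?Pm. \<Sum>r<R. ?w ys \<pi> r * ?EU ys \<pi> r)"
    proof (rule sum.cong[OF refl])
      fix \<pi> assume \<pi>: "\<pi> \<in> ?Pm"
      have "(\<integral>xs. (\<Sum>r<R. ?w ys \<pi> r * U_Omega \<phi> f N xs ys \<pi> r) \<partial>?P ys)
          = (\<Sum>r<R. (\<integral>xs. ?w ys \<pi> r * U_Omega \<phi> f N xs ys \<pi> r \<partial>?P ys))"
        using i1[OF \<pi>] by (intro Bochner_Integration.integral_sum) auto
      then show "(\<integral>xs. (\<Sum>r<R. ?w ys \<pi> r * U_Omega \<phi> f N xs ys \<pi> r) \<partial>?P ys) = (\<Sum>r<R. ?w ys \<pi> r * ?EU ys \<pi> r)"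
        by simp
    qed
    finally show ?thesis .
  qed
  have "sample_expect R \<rho> D N (Ubar R \<phi> f N)
      = (\<Sum>ys\<in>{..<N} \<rightarrow>\<^sub>E {..<R}. (\<Prod>j<N. \<rho> (ys j)) * ((1 / fact N) * (\<Sum>\<pi>\<in>?Pm. \<Sum>r<R. ?w ys \<pi> r * ?EU ys \<pi> r)))"
    unfolding sample_expect_def intU ..
  also have "\<dots> = (1 / fact N) * (\<Sum>ys\<in>{..<N} \<rightarrow>\<^sub>E {..<R}. \<Sum>\<pi>\<in>?Pm. \<Sum>r<R. (\<Prod>j<N. \<rho> (ys j)) * (?w ys \<pi> r * ?EU ys \<pi> r))"
    by (simp add: sum_distrib_left mult_ac)
  also have "(\<Sum>ys\<in>{..<N} \<rightarrow>\<^sub>E {..<R}. \<Sum>\<pi>\<in>?Pm. \<Sum>r<R. (\<Prod>j<N. \<rho> (ys j)) * (?w ys \<pi> r * ?EU ys \<pi> r))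
      = (\<Sum>\<pi>\<in>?Pm. \<Sum>ys\<in>{..<N} \<rightarrow>\<^sub>E {..<R}. \<Sum>r<R. (\<Prod>j<N. \<rho> (ys j)) * (?w ys \<pi> r * ?EU ys \<pi> r))"
    by (rule sum.swap)
  also have "\<dots> = (\<Sum>\<pi>\<in>?Pm. \<Sum>r<R. \<Sum>ys\<in>{..<N} \<rightarrow>\<^sub>E {..<R}. (\<Prod>j<N. \<rho> (ys j)) * (?w ys \<pi> r * ?EU ys \<pi> r))"
    by (intro sum.cong refl sum.swap)
  also have "\<dots> = (\<Sum>\<pi>\<in>?Pm. \<Sum>r<R. Wt N \<pi> r * Lr r)"
    using T_eq[OF nR] by (intro sum.cong refl) auto
  finally show ?thesis .
qed

end

context mainset
begin

lemma main_bounds: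
  assumes nR: "R < half_size CARD('k) N"
  shows "(1 - 2 / (real (half_size CARD('k) N) * Min (\<rho> ` {..<R}))) * pop_risk M R \<rho> D \<phi> f
           \<le> sample_expect R \<rho> D N (Ubar R \<phi> f N)"
    and "sample_expect R \<rho> D N (Ubar R \<phi> f N)
           \<le> (1 + real R / (real (half_size CARD('k) N) - real R)) * pop_risk M R \<rho> D \<phi> f"
proof -
  let ?n = "real (half_size CARD('k) N)"
  let ?m = "Min (\<rho> ` {..<R})"
  let ?Pm = "{\<pi>. \<pi> permutes {..<N}}"
  have finPm: "finite ?Pm" by (rule finite_permutations) simp
  have cardPm: "real (card ?Pm) = fact N" using card_permutations[of "{..<N}" N] by simp
  have npos: "?n > 0" and nRpos: "?n - real R > 0" using nR by auto
  have "0 \<in> {..<R}" using R2 by simp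
  then have Rne: "{..<R} \<noteq> {}" by blast
  have mpos: "?m > 0" using Rne rho_pos by (subst Min_gr_iff) auto
  have mle: "?m \<le> \<rho> r" if "r < R" for r using that by (intro Min_le) auto
  have E: "sample_expect R \<rho> D N (Ubar R \<phi> f N) = (1 / fact N) * (\<Sum>\<pi>\<in>?Pm. \<Sum>r<R. Wt N \<pi> r * Lr r)"
    by (rule sample_eq[OF nR])
  have avg: "(1 / fact N) * (\<Sum>\<pi>\<in>?Pm. c) = c" for c :: real
    using cardPm by simp
  have "(\<Sum>\<pi>\<in>?Pm. \<Sum>r<R. Wt N \<pi> r * Lr r) \<le> (\<Sum>\<pi>\<in>?Pm. \<Sum>r<R. (?n * \<rho> r / (?n - real R)) * Lr r)"
    using Wt_bounds(1)[OF nR] by (intro sum_mono mult_right_mono Lr_nonneg) auto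
  also have "\<dots> = (\<Sum>\<pi>\<in>?Pm. (1 + real R / (?n - real R)) * pop_risk M R \<rho> D \<phi> f)"
  proof -
    have "?n / (?n - real R) = 1 + real R / (?n - real R)" using nRpos by (simp add: field_simps)
    then have "(\<Sum>r<R. (?n * \<rho> r / (?n - real R)) * Lr r) = (1 + real R / (?n - real R)) * (\<Sum>r<R. \<rho> r * Lr r)"
      unfolding sum_distrib_left
    proof (intro sum.cong refl)
      fix r assume eq: "?n / (?n - real R) = 1 + real R / (?n - real R)"
      have "?n * \<rho> r / (?n - real R) * Lr r = (?n / (?n - real R)) * (\<rho> r * Lr r)" by simp
      then show "?n * \<rho> r / (?n - real R) * Lr r = (1 + real R / (?n - real R)) * (\<rho> r * Lr r)"
        unfolding eq .
    qed
    then show ?thesis by (simp add: pop_risk_eq)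
  qed
  finally have up: "(\<Sum>\<pi>\<in>?Pm. \<Sum>r<R. Wt N \<pi> r * Lr r) \<le> (\<Sum>\<pi>\<in>?Pm. (1 + real R / (?n - real R)) * pop_risk M R \<rho> D \<phi> f)" .
  show "sample_expect R \<rho> D N (Ubar R \<phi> f N) \<le> (1 + real R / (?n - real R)) * pop_risk M R \<rho> D \<phi> f"
    unfolding E using mult_left_mono[OF up, of "1 / fact N"] avg by simp
  have lowr: "\<rho> r * (1 - 2 / (?n * ?m)) \<le> Wt N \<pi> r" if "r < R" "\<pi> permutes {..<N}" for r \<pi>
  proof -
    have "\<rho> r * (1 - 2 / (?n * ?m)) = \<rho> r - (\<rho> r / ?m) * (2 / ?n)" by (simp add: field_simps)
    also have "\<dots> \<le> \<rho> r - 1 * (1 / ?n)"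
    proof -
      have "1 \<le> \<rho> r / ?m" using mle[OF that(1)] mpos by simp
      moreover have "1 / ?n \<le> 2 / ?n" using npos by (simp add: divide_right_mono)
      ultimately have "1 * (1 / ?n) \<le> (\<rho> r / ?m) * (2 / ?n)" using npos by (intro mult_mono) auto
      then show ?thesis by simp
    qed
    also have "\<dots> \<le> Wt N \<pi> r" using Wt_bounds(2)[OF nR that(2) that(1)] by simp
    finally show ?thesis .
  qed
  have "(\<Sum>\<pi>\<in>?Pm. (1 - 2 / (?n * ?m)) * pop_risk M R \<rho> D \<phi> f) = (\<Sum>\<pi>\<in>?Pm. \<Sum>r<R. (\<rho> r * (1 - 2 / (?n * ?m))) * Lr r)"
  proof -
    have "(1 - 2 / (?n * ?m)) * pop_risk M R \<rho> D \<phi> f = (\<Sum>r<R. (\<rho> r * (1 - 2 / (?n * ?m))) * Lr r)"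
      unfolding pop_risk_eq sum_distrib_left by (intro sum.cong refl) (simp add: mult_ac)
    then show ?thesis by simp
  qed
  also have "\<dots> \<le> (\<Sum>\<pi>\<in>?Pm. \<Sum>r<R. Wt N \<pi> r * Lr r)"
    using lowr by (intro sum_mono mult_right_mono Lr_nonneg) auto
  finally have lo: "(\<Sum>\<pi>\<in>?Pm. (1 - 2 / (?n * ?m)) * pop_risk M R \<rho> D \<phi> f) \<le> (\<Sum>\<pi>\<in>?Pm. \<Sum>r<R. Wt N \<pi> r * Lr r)" .
  show "(1 - 2 / (?n * ?m)) * pop_risk M R \<rho> D \<phi> f \<le> sample_expect R \<rho> D N (Ubar R \<phi> f N)"
    unfolding E using mult_left_mono[OF lo, of "1 / fact N"] avg by simp
qed

end

theorem mainTheorem6: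
  fixes M :: "'a measure"
    and R :: nat
    and \<rho> :: "nat \<Rightarrow> real"
    and D :: "nat \<Rightarrow> 'a measure"
    and \<phi> :: "real^'k \<Rightarrow> real"
    and f :: "'a \<Rightarrow> real^'d"
    and B :: real
  assumes R2: "R \<ge> 2"
    and rho_pos: "\<forall>r<R. \<rho> r > 0"
    and rho_sum: "(\<Sum>r<R. \<rho> r) = 1"
    and D_prob: "\<forall>r<R. prob_space (D r)"
    and D_sets: "\<forall>r<R. sets (D r) = sets M"
    and f_meas: "f \<in> borel_measurable M"
    and phi_meas: "\<phi> \<in> borel_measurable borel"
    and phi_nonneg: "\<forall>v. \<phi> v \<ge> 0"
    and loss_bounded: "\<forall>x\<in>space M. \<forall>xp\<in>space M. \<forall>xn. (\<forall>i. xn i \<in> space M) \<longrightarrow>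
                          closs \<phi> f x xp xn \<le> B"
  shows "(\<forall>N. R < half_size CARD('k) N \<longrightarrow>
            (1 - 2 / (real (half_size CARD('k) N) * Min (\<rho> ` {..<R}))) * pop_risk M R \<rho> D \<phi> f
              \<le> sample_expect R \<rho> D N (Ubar R \<phi> f N)
          \<and> sample_expect R \<rho> D N (Ubar R \<phi> f N)
              \<le> (1 + real R / (real (half_size CARD('k) N) - real R)) * pop_risk M R \<rho> D \<phi> f)
       \<and> (\<lambda>N. sample_expect R \<rho> D N (Ubar R \<phi> f N)) \<longlonglongrightarrow> pop_risk M R \<rho> D \<phi> f"
proof -
  define D' where "D' r = (if r < R then D r else D 0)" for r
  have R0: "0 < R" using R2 by simp
  have D'prob: "prob_space (D' r)" for r using D_prob R0 by (simp add: D'_def)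
  have D'sets: "sets (D' r) = sets M" for r using D_sets R0 by (simp add: D'_def)
  have cs: "clset M R \<rho> D'"
    unfolding clset_def using rho_pos rho_sum D'prob D'sets by blast
  interpret ms: mainset M R \<rho> D' \<phi> f B
  proof (rule mainset.intro[OF cs], unfold mainset_axioms_def, intro conjI allI impI)
    show "2 \<le> R" by (rule R2)
    show "f \<in> borel_measurable M" by (rule f_meas)
    show "\<phi> \<in> borel_measurable borel" by (rule phi_meas)
    show "0 \<le> \<phi> v" for v using phi_nonneg by simp
    show "closs \<phi> f x xp xn \<le> B" if "x \<in> space M" "xp \<in> space M" "\<forall>i. xn i \<in> space M" for x xp xn
      using loss_bounded that by blast
  qed
  have mixeq: "mixture M R \<rho> D = mixture M R \<rho> D'"
    unfolding mixture_def by (intro arg_cong[where f="measure_of (space M) (sets M)"] ext sum.cong) (auto simp: D'_def)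
  have popeq: "pop_risk M R \<rho> D \<phi> f = pop_risk M R \<rho> D' \<phi> f"
    unfolding pop_risk_def mixeq by (intro sum.cong refl) (simp add: D'_def)
  have seq: "sample_expect R \<rho> D N G = sample_expect R \<rho> D' N G" for N G
    unfolding sample_expect_def
  proof (intro sum.cong refl)
    fix ys assume ys: "ys \<in> {..<N} \<rightarrow>\<^sub>E {..<R}"
    have "PiM {..<N} (\<lambda>j. D (ys j)) = PiM {..<N} (\<lambda>j. D' (ys j))"
      using ys by (intro PiM_cong) (auto simp: D'_def)
    then show "(\<Prod>j<N. \<rho> (ys j)) * (\<integral>xs. G xs ys \<partial>PiM {..<N} (\<lambda>j. D (ys j)))
        = (\<Prod>j<N. \<rho> (ys j)) * (\<integral>xs. G xs ys \<partial>PiM {..<N} (\<lambda>j. D' (ys j)))" by simp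
  qed
  let ?n = "\<lambda>N. half_size CARD('k) N"
  let ?E = "\<lambda>N. sample_expect R \<rho> D N (Ubar R \<phi> f N)"
  let ?p = "pop_risk M R \<rho> D \<phi> f"
  let ?m = "Min (\<rho> ` {..<R})"
  have bnds: "(1 - 2 / (real (?n N) * ?m)) * ?p \<le> ?E N \<and> ?E N \<le> (1 + real R / (real (?n N) - real R)) * ?p"
    if "R < ?n N" for N
    unfolding seq popeq using ms.main_bounds[OF that] by simp
  have n_top: "filterlim (\<lambda>N. real (?n N)) at_top sequentially"
  proof (subst filterlim_at_top, intro allI)
    fix Z :: real
    define z where "z = nat \<lceil>Z\<rceil>"
    show "eventually (\<lambda>N. Z \<le> real (?n N)) sequentially"
    proof (rule eventually_sequentiallyI[of "(CARD('k) + 2) * z"])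
      fix N assume N: "(CARD('k) + 2) * z \<le> N"
      have "z = (CARD('k) + 2) * z div (CARD('k) + 2)" by (rule nonzero_mult_div_cancel_left[symmetric]) simp
      also have "\<dots> \<le> N div (CARD('k) + 2)" using N by (rule div_le_mono)
      finally have "z \<le> N div (CARD('k) + 2)" .
      then have "real z \<le> real (?n N)" unfolding half_size_def by simp
      moreover have "Z \<le> real z" unfolding z_def by linarith
      ultimately show "Z \<le> real (?n N)" by linarith
    qed
  qed
  have ev: "eventually (\<lambda>N. R < ?n N) sequentially"
  proof -
    have "eventually (\<lambda>N. real R + 1 \<le> real (?n N)) sequentially"
      using n_top by (simp add: filterlim_at_top)
    then show ?thesis by eventually_elim simp
  qed
  have lim_lo: "(\<lambda>N. (1 - 2 / (real (?n N) * ?m)) * ?p) \<longlonglongrightarrow> (1 - 0) * ?p"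
  proof (intro tendsto_intros)
    have "(\<lambda>N. 2 / ?m * inverse (real (?n N))) \<longlonglongrightarrow> 2 / ?m * 0"
      by (intro tendsto_intros tendsto_inverse_0_at_top n_top)
    moreover have "(\<lambda>N. 2 / ?m * inverse (real (?n N))) = (\<lambda>N. 2 / (real (?n N) * ?m))"
      by (simp add: fun_eq_iff divide_inverse inverse_mult_distrib mult_ac)
    ultimately show "(\<lambda>N. 2 / (real (?n N) * ?m)) \<longlonglongrightarrow> 0" by simp
  qed
  have lim_hi: "(\<lambda>N. (1 + real R / (real (?n N) - real R)) * ?p) \<longlonglongrightarrow> (1 + 0) * ?p"
  proof (intro tendsto_intros)
    have t: "filterlim (\<lambda>N. - real R + real (?n N)) at_top sequentially"
      by (rule filterlim_tendsto_add_at_top[OF tendsto_const n_top])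
    have "(\<lambda>N. real R * inverse (- real R + real (?n N))) \<longlonglongrightarrow> real R * 0"
      by (intro tendsto_intros tendsto_inverse_0_at_top t)
    moreover have "(\<lambda>N. real R * inverse (- real R + real (?n N))) = (\<lambda>N. real R / (real (?n N) - real R))"
      by (simp add: fun_eq_iff divide_inverse)
    ultimately show "(\<lambda>N. real R / (real (?n N) - real R)) \<longlonglongrightarrow> 0" by simp
  qed
  have "?E \<longlonglongrightarrow> ?p"
  proof (rule tendsto_sandwich[OF _ _ lim_lo[simplified] lim_hi[simplified]])
    show "eventually (\<lambda>N. (1 - 2 / (real (?n N) * ?m)) * ?p \<le> ?E N) sequentially"
      using ev by eventually_elim (use bnds in blast)
    show "eventually (\<lambda>N. ?E N \<le> (1 + real R / (real (?n N) - real R)) * ?p) sequentially"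
      using ev by eventually_elim (use bnds in blast)
  qed
  then show ?thesis using bnds by blast
qed


end
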